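(* Let $d,a,b,p,p'\ge 0$ be integers and \[F=\sum_{\mu\vdash d}\{s_\mu h_a\}_{\lambda_1=p}\otimes\{s_\mu h_b\}_{\lambda_1=p'} .\] Let $\lambda^{(1)}\vdash a+d$ and $\lambda^{(2)}\vdash b+d$. If $\lambda^{(1)}_1=p$, $\lambda^{(2)}_1=p'$, and $\min\{\lambda^{(1)}_i,\lambda^{(2)}_i\}\ge\max\{\lambda^{(1)}_{i+1},\lambda^{(2)}_{i+1}\}$ for all $i\ge1$, then the coefficient of $s_{\lambda^{(1)}}\otimes s_{\lambda^{(2)}}$ in the Schur expansion of $F$ equals the coefficient of $t^{\,d-\sum_{i\ge1}\max\{\lambda^{(1)}_{i+1},\lambda^{(2)}_{i+1}\}}$ in the polynomial \[\prod_{i\ge1}\Bigl(\sum_{j=0}^{\min\{\lambda^{(1)}_i,\lambda^{(2)}_i\}-\max\{\lambda^{(1)}_{i+1},\lambda^{(2)}_{i+1}\}}t^j\Bigr).\] Otherwise this coefficient is $0$.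
   Context: $\Lambda$ is the ring of symmetric functions, $s_\lambda$ the Schur functions, $h_k$ the complete homogeneous symmetric functions ($h_k=0$ for $k<0$). For $G=\sum_\lambda c_\lambda s_\lambda\in\Lambda$ and an integer $p$, the truncation $\{G\}_{\lambda_1=p}:=\sum_{\lambda:\lambda_1=p}c_\lambda s_\lambda$. Partitions are padded with zeros, so $\lambda_i=0$ for $i$ larger than the length; $t$ is a formal variable (the product is finite since almost all factors equal $1$). *)

theory Defs
  imports Main "HOL-Computational_Algebra.Polynomial"
begin

text \<open>A partition is a weakly decreasing list of positive naturals.
  Parts are 1-indexed and padded with zeros.\<close>

definition is_partition :: "nat list \<Rightarrow> bool" where
  "is_partition lam \<longleftrightarrow> sorted_wrt (\<ge>) lam \<and> 0 \<notin> set lam"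

definition partitions_of :: "nat \<Rightarrow> nat list set" where
  "partitions_of n = {lam. is_partition lam \<and> sum_list lam = n}"

definition part :: "nat list \<Rightarrow> nat \<Rightarrow> nat" where
  "part lam i = (if 1 \<le> i \<and> i \<le> length lam then lam ! (i - 1) else 0)"

text \<open>An element of Lambda is represented by its coefficient function on monomials
  (exponent vectors nat => nat); an element of Lambda (x) Lambda by its coefficient
  function on pairs of monomials.\<close>

type_synonym monomial = "nat \<Rightarrow> nat"
type_synonym symfun = "monomial \<Rightarrow> int"
type_synonym symfun2 = "monomial \<Rightarrow> monomial \<Rightarrow> int"

definition sf_mult :: "symfun \<Rightarrow> symfun \<Rightarrow> symfun" where
  "sf_mult f g = (\<lambda>\<alpha>. \<Sum>\<beta>\<in>{\<beta>. \<forall>i. \<beta> i \<le> \<alpha> i}. f \<beta> * g (\<lambda>i. \<alpha> i - \<beta> i))"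

definition complete_h :: "nat \<Rightarrow> symfun" where
  "complete_h k = (\<lambda>\<alpha>. if finite {i. \<alpha> i \<noteq> 0} \<and> (\<Sum>i\<in>{i. \<alpha> i \<noteq> 0}. \<alpha> i) = k
                        then 1 else 0)"

text \<open>Cells of the Young diagram (0-indexed rows/columns) and semistandard tableaux.\<close>

definition cells :: "nat list \<Rightarrow> (nat \<times> nat) set" where
  "cells lam = {(i, j). i < length lam \<and> j < lam ! i}"

definition ssyt :: "nat list \<Rightarrow> (nat \<times> nat \<Rightarrow> nat) \<Rightarrow> bool" where
  "ssyt lam T \<longleftrightarrow>
     (\<forall>c. c \<notin> cells lam \<longrightarrow> T c = 0) \<and>
     (\<forall>i j. (i, j + 1) \<in> cells lam \<longrightarrow> T (i, j) \<le> T (i, j + 1)) \<and>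
     (\<forall>i j. (i + 1, j) \<in> cells lam \<longrightarrow> T (i, j) < T (i + 1, j))"

definition content :: "nat list \<Rightarrow> (nat \<times> nat \<Rightarrow> nat) \<Rightarrow> monomial" where
  "content lam T = (\<lambda>k. card {c \<in> cells lam. T c = k})"

definition schur :: "nat list \<Rightarrow> symfun" where
  "schur lam = (\<lambda>\<alpha>. int (card {T. ssyt lam T \<and> content lam T = \<alpha>}))"

definition schur_coeff :: "symfun \<Rightarrow> nat list \<Rightarrow> int" where
  "schur_coeff G = (THE c. finite {\<mu>. c \<mu> \<noteq> 0} \<and> (\<forall>\<mu>. c \<mu> \<noteq> 0 \<longrightarrow> is_partition \<mu>) \<and>
       G = (\<lambda>\<alpha>. \<Sum>\<mu>\<in>{\<mu>. c \<mu> \<noteq> 0}. c \<mu> * schur \<mu> \<alpha>))"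

definition truncate_first :: "nat \<Rightarrow> symfun \<Rightarrow> symfun" where
  "truncate_first p G = (\<lambda>\<alpha>. \<Sum>\<mu>\<in>{\<mu>. schur_coeff G \<mu> \<noteq> 0 \<and> part \<mu> 1 = p}.
                            schur_coeff G \<mu> * schur \<mu> \<alpha>)"

definition schur_coeff2 :: "symfun2 \<Rightarrow> nat list \<times> nat list \<Rightarrow> int" where
  "schur_coeff2 F = (THE c. finite {m. c m \<noteq> 0} \<and>
       (\<forall>\<mu> \<nu>. c (\<mu>, \<nu>) \<noteq> 0 \<longrightarrow> is_partition \<mu> \<and> is_partition \<nu>) \<and>
       F = (\<lambda>\<alpha> \<beta>. \<Sum>(\<mu>, \<nu>)\<in>{m. c m \<noteq> 0}. c (\<mu>, \<nu>) * (schur \<mu> \<alpha> * schur \<nu> \<beta>)))"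

definition F_sum :: "nat \<Rightarrow> nat \<Rightarrow> nat \<Rightarrow> nat \<Rightarrow> nat \<Rightarrow> symfun2" where
  "F_sum d a b p p' = (\<lambda>\<alpha> \<beta>. \<Sum>\<mu>\<in>partitions_of d.
      truncate_first p (sf_mult (schur \<mu>) (complete_h a)) \<alpha> *
      truncate_first p' (sf_mult (schur \<mu>) (complete_h b)) \<beta>)"

end

theory Submission
  imports Defs "HOL-Library.FuncSet"
begin

definition sh :: "nat list \<Rightarrow> nat \<Rightarrow> nat" where
  "sh lam i = (if i < length lam then lam ! i else 0)"

definition cellsF :: "(nat \<Rightarrow> nat) \<Rightarrow> (nat \<times> nat) set" where
  "cellsF f = {(i, j). j < f i}"

definition ssytF :: "(nat \<Rightarrow> nat) \<Rightarrow> (nat \<times> nat \<Rightarrow> nat) \<Rightarrow> bool" where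
  "ssytF f T \<longleftrightarrow>
     (\<forall>c. c \<notin> cellsF f \<longrightarrow> T c = 0) \<and>
     (\<forall>i j. (i, j + 1) \<in> cellsF f \<longrightarrow> T (i, j) \<le> T (i, j + 1)) \<and>
     (\<forall>i j. (i + 1, j) \<in> cellsF f \<longrightarrow> T (i, j) < T (i + 1, j))"

definition contF :: "(nat \<Rightarrow> nat) \<Rightarrow> (nat \<times> nat \<Rightarrow> nat) \<Rightarrow> nat \<Rightarrow> nat" where
  "contF f T = (\<lambda>k. card {c \<in> cellsF f. T c = k})"

definition Tab :: "(nat \<Rightarrow> nat) \<Rightarrow> (nat \<Rightarrow> nat) \<Rightarrow> (nat \<times> nat \<Rightarrow> nat) set" where
  "Tab f \<alpha> = {T. ssytF f T \<and> contF f T = \<alpha>}"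

definition schurF :: "(nat \<Rightarrow> nat) \<Rightarrow> (nat \<Rightarrow> nat) \<Rightarrow> int" where
  "schurF f \<alpha> = int (card (Tab f \<alpha>))"

definition HS :: "(nat \<Rightarrow> nat) \<Rightarrow> (nat \<Rightarrow> nat) \<Rightarrow> bool" where
  "HS g f \<longleftrightarrow> (\<forall>i. f (Suc i) \<le> g i \<and> g i \<le> f i)"

definition sz :: "(nat \<Rightarrow> nat) \<Rightarrow> nat" where
  "sz f = sum f {i. f i \<noteq> 0}"

lemma cells_sh: "cells lam = cellsF (sh lam)"
  by (auto simp: cells_def cellsF_def sh_def split: if_splits)

lemma schur_sh: "schur lam = schurF (sh lam)"
  unfolding schur_def schurF_def Tab_def ssyt_def ssytF_def content_def contF_def cells_sh ..

lemma bounded_funs_finite: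
  assumes "finite C"
  shows "finite {h::'a\<Rightarrow>nat. (\<forall>x. x \<notin> C \<longrightarrow> h x = 0) \<and> (\<forall>x. h x \<le> N)}" (is "finite ?S")
proof -
  have "inj_on (\<lambda>h. restrict h C) ?S"
  proof (rule inj_onI)
    fix h1 h2 assume h: "h1 \<in> ?S" "h2 \<in> ?S" "restrict h1 C = restrict h2 C"
    show "h1 = h2"
    proof
      fix x show "h1 x = h2 x"
      proof (cases "x \<in> C")
        case True then show ?thesis using fun_cong[OF h(3), of x] by simp
      next
        case False then show ?thesis using h(1,2) by simp
      qed
    qed
  qed
  moreover have "(\<lambda>h. restrict h C) ` ?S \<subseteq> PiE C (\<lambda>_. {..N})" by auto
  moreover have "finite (PiE C (\<lambda>_. {..N}))" using assms by (simp add: finite_PiE)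
  ultimately have "finite ((\<lambda>h. restrict h C) ` ?S)" using finite_subset by blast
  then show ?thesis using \<open>inj_on _ ?S\<close> finite_imageD by blast
qed

lemma sz_eq: assumes "\<forall>i\<ge>K. f i = 0" shows "sz f = (\<Sum>i<K. f i)"
  unfolding sz_def
proof (rule sum.mono_neutral_left)
  show "{i. f i \<noteq> 0} \<subseteq> {..<K}" using assms by (auto intro: ccontr simp: not_less)
qed auto

lemma cellsF_Sigma: assumes "\<forall>i\<ge>K. f i = 0" shows "cellsF f = Sigma {..<K} (\<lambda>i. {..<f i})"
  using assms by (auto intro: ccontr simp: cellsF_def not_less)

lemma finite_cellsF: assumes "\<forall>i\<ge>K. f i = 0" shows "finite (cellsF f)"
  using cellsF_Sigma[OF assms] by simp

lemma card_cellsF: assumes "\<forall>i\<ge>K. f i = 0" shows "card (cellsF f) = sz f"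
  using cellsF_Sigma[OF assms] sz_eq[OF assms] by simp

lemma cellsF_inj: assumes "cellsF g = cellsF h" shows "g = h"
proof
  fix i
  have "\<forall>j. j < g i \<longleftrightarrow> j < h i" using assms by (auto simp: cellsF_def set_eq_iff)
  then have "\<not> g i < h i" "\<not> h i < g i" by auto
  then show "g i = h i" by linarith
qed

lemma tab_entry:
  assumes "ssytF f T" "contF f T = \<alpha>" "c \<in> cellsF f" "finite (cellsF f)"
  shows "\<alpha> (T c) \<noteq> 0"
proof -
  have "c \<in> {c' \<in> cellsF f. T c' = T c}" using assms by auto
  moreover have "finite {c' \<in> cellsF f. T c' = T c}" using assms(4) by simp
  ultimately have "card {c' \<in> cellsF f. T c' = T c} \<noteq> 0" by (metis card_0_eq empty_iff)
  then show ?thesis using assms(2) unfolding contF_def by metis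
qed

lemma Tab_finite:
  assumes "\<forall>i\<ge>K. f i = 0" "\<forall>t\<ge>N. \<alpha> t = 0"
  shows "finite (Tab f \<alpha>)"
proof -
  have "Tab f \<alpha> \<subseteq> {h. (\<forall>x. x \<notin> cellsF f \<longrightarrow> h x = 0) \<and> (\<forall>x. h x \<le> N)}"
  proof safe
    fix T x assume T: "T \<in> Tab f \<alpha>"
    then show "x \<notin> cellsF f \<Longrightarrow> T x = 0" unfolding Tab_def ssytF_def by blast
    show "T x \<le> N"
    proof (cases "x \<in> cellsF f")
      case True
      have T2: "ssytF f T" "contF f T = \<alpha>" using T by (auto simp: Tab_def)
      have "\<alpha> (T x) \<noteq> 0" using tab_entry[OF T2 True finite_cellsF[OF assms(1)]] .
      have "\<not> N \<le> T x"
      proof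
        assume "N \<le> T x" then have "\<alpha> (T x) = 0" using assms(2) by simp
        then show False using \<open>\<alpha> (T x) \<noteq> 0\<close> by simp
      qed
      then show ?thesis by simp
    next
      case False then have "T x = 0" using T unfolding Tab_def ssytF_def by blast
      then show ?thesis by simp
    qed
  qed
  then show ?thesis using bounded_funs_finite[OF finite_cellsF[OF assms(1)]] finite_subset by blast
qed

lemma row_mono:
  assumes "ssytF f T" "j < f i" "j' \<le> j"
  shows "T (i, j') \<le> T (i, j)"
  using assms(3,2)
proof (induction j rule: dec_induct)
  case base then show ?case by simp
next
  case (step m)
  then have "T (i, j') \<le> T (i, m)" by simp
  moreover have "(i, m + 1) \<in> cellsF f" using step by (simp add: cellsF_def)
  ultimately show ?case using assms(1) unfolding ssytF_def by (metis Suc_eq_plus1 le_trans)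
qed

lemma downclosed_lessThan:
  fixes S :: "nat set"
  assumes "finite S" "\<And>j j'. j \<in> S \<Longrightarrow> j' < j \<Longrightarrow> j' \<in> S"
  shows "S = {..<card S}"
proof -
  obtain k where k: "k \<notin> S" using assms(1) ex_new_if_finite infinite_UNIV_nat by blast
  define m where "m = (LEAST x. x \<notin> S)"
  have m1: "m \<notin> S" unfolding m_def using k by (rule LeastI)
  have m2: "x < m \<Longrightarrow> x \<in> S" for x unfolding m_def using not_less_Least by blast
  have "S = {..<m}"
  proof
    show "S \<subseteq> {..<m}"
    proof
      fix x assume x: "x \<in> S"
      show "x \<in> {..<m}"
      proof (rule ccontr)
        assume "x \<notin> {..<m}"
        then have "m \<le> x" by simp
        then have "m = x \<or> m < x" by linarith
        then show False using m1 x assms(2)[of x m] by blast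
      qed
    qed
    show "{..<m} \<subseteq> S" using m2 by auto
  qed
  then show ?thesis by (metis card_lessThan)
qed

definition extT :: "(nat \<Rightarrow> nat) \<Rightarrow> (nat \<Rightarrow> nat) \<Rightarrow> nat \<Rightarrow> (nat \<times> nat \<Rightarrow> nat) \<Rightarrow> (nat \<times> nat \<Rightarrow> nat)" where
  "extT f g n T' = (\<lambda>c. if c \<in> cellsF g then T' c else if c \<in> cellsF f then n else 0)"

lemma HS_dec: "HS g f \<Longrightarrow> g (Suc i) \<le> g i"
  unfolding HS_def by (metis le_trans)

lemma HS_dec2: "HS g f \<Longrightarrow> f (Suc i) \<le> f i"
  unfolding HS_def by (metis le_trans)

lemma HS_cells: "HS g f \<Longrightarrow> cellsF g \<subseteq> cellsF f"
  unfolding HS_def cellsF_def by (auto intro: less_le_trans)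

lemma HS_K: "HS g f \<Longrightarrow> \<forall>i\<ge>K. f i = 0 \<Longrightarrow> \<forall>i\<ge>K. g i = 0"
  unfolding HS_def by (metis le_zero_eq)

lemma entries_lt:
  assumes "T' \<in> Tab g (\<alpha>(n:=0))" "c \<in> cellsF g" "finite (cellsF g)" "\<forall>k>n. \<alpha> k = 0"
  shows "T' c < n"
proof -
  have "(\<alpha>(n:=0)) (T' c) \<noteq> 0" using tab_entry[of g T' "\<alpha>(n:=0)" c] assms(1-3) by (simp add: Tab_def)
  then have "T' c \<noteq> n" "\<not> n < T' c" using assms(4) by (auto split: if_splits)
  then show ?thesis by linarith
qed

lemma ext_in:
  assumes HS: "HS g f" and sz: "sz g + \<alpha> n = sz f" and fK: "\<forall>i\<ge>K. f i = 0"
    and aN: "\<forall>k>n. \<alpha> k = 0" and T': "T' \<in> Tab g (\<alpha>(n:=0))"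
  shows "extT f g n T' \<in> Tab f \<alpha>"
proof -
  have gK: "\<forall>i\<ge>K. g i = 0" using HS_K[OF HS fK] .
  have fing: "finite (cellsF g)" using finite_cellsF[OF gK] .
  have lt: "c \<in> cellsF g \<Longrightarrow> T' c < n" for c using entries_lt[OF T' _ fing aN] by blast
  have sub: "cellsF g \<subseteq> cellsF f" using HS_cells[OF HS] .
  have sT': "ssytF g T'" and cT': "contF g T' = \<alpha>(n:=0)" using T' by (auto simp: Tab_def)
  let ?T = "extT f g n T'"
  have s1: "\<forall>c. c \<notin> cellsF f \<longrightarrow> ?T c = 0" using sub by (auto simp: extT_def)
  have s2: "?T (i, j) \<le> ?T (i, j + 1)" if "(i, j + 1) \<in> cellsF f" for i j
  proof (cases "(i, j + 1) \<in> cellsF g")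
    case True
    then have "(i, j) \<in> cellsF g" by (simp add: cellsF_def)
    then show ?thesis using True sT' by (simp add: extT_def ssytF_def)
  next
    case False
    have "(i, j) \<in> cellsF f" using that by (simp add: cellsF_def)
    then show ?thesis using False lt[of "(i,j)"] that by (auto simp: extT_def)
  qed
  have s3: "?T (i, j) < ?T (i + 1, j)" if "(i + 1, j) \<in> cellsF f" for i j
  proof (cases "(i + 1, j) \<in> cellsF g")
    case True
    then have "(i, j) \<in> cellsF g" using HS_dec[OF HS, of i] by (simp add: cellsF_def)
    then show ?thesis using True sT' by (simp add: extT_def ssytF_def)
  next
    case False
    have "(i, j) \<in> cellsF g" using that HS unfolding HS_def cellsF_def by (auto intro: less_le_trans)
    then show ?thesis using False lt[of "(i,j)"] that by (auto simp: extT_def)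
  qed
  have ss: "ssytF f ?T" unfolding ssytF_def using s1 s2 s3 by blast
  have fin: "finite (cellsF f)" using finite_cellsF[OF fK] .
  have cont: "contF f ?T k = \<alpha> k" for k
  proof (cases "k = n")
    case True
    have "{c \<in> cellsF f. ?T c = k} = cellsF f - cellsF g" using lt True by (auto simp: extT_def)
    then have "contF f ?T k = card (cellsF f) - card (cellsF g)" using sub fing
      by (simp add: contF_def card_Diff_subset)
    also have "\<dots> = \<alpha> n" using card_cellsF[OF fK] card_cellsF[OF gK] sz by simp
    finally show ?thesis using True by simp
  next
    case False
    have "{c \<in> cellsF f. ?T c = k} = {c \<in> cellsF g. T' c = k}" using False sub by (auto simp: extT_def)
    then have "contF f ?T k = contF g T' k" by (simp add: contF_def)
    then show ?thesis using cT' False by simp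
  qed
  show ?thesis using ss cont by (auto simp: Tab_def)
qed

lemma ext_recover:
  assumes HS: "HS g f" and fK: "\<forall>i\<ge>K. f i = 0"
    and aN: "\<forall>k>n. \<alpha> k = 0" and T': "T' \<in> Tab g (\<alpha>(n:=0))"
  shows "{c \<in> cellsF f. extT f g n T' c < n} = cellsF g"
proof -
  have gK: "\<forall>i\<ge>K. g i = 0" using HS_K[OF HS fK] .
  have fing: "finite (cellsF g)" using finite_cellsF[OF gK] .
  have lt: "c \<in> cellsF g \<Longrightarrow> T' c < n" for c using entries_lt[OF T' _ fing aN] by blast
  have sub: "cellsF g \<subseteq> cellsF f" using HS_cells[OF HS] .
  show ?thesis using lt sub by (auto simp: extT_def)
qed

lemma ext_inj:
  assumes "T1 \<in> Tab g \<beta>" "T2 \<in> Tab g \<beta>" "extT f g n T1 = extT f g n T2"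
  shows "T1 = T2"
proof
  fix c
  show "T1 c = T2 c"
  proof (cases "c \<in> cellsF g")
    case True then show ?thesis using fun_cong[OF assms(3), of c] by (simp add: extT_def)
  next
    case False
    have "T1 c = 0" "T2 c = 0" using assms(1,2) False unfolding Tab_def ssytF_def by blast+
    then show ?thesis by simp
  qed
qed

lemma decomp:
  assumes fdec: "\<forall>i. f (Suc i) \<le> f i" and fK: "\<forall>i\<ge>K. f i = 0"
    and aN: "\<forall>k>n. \<alpha> k = 0" and T: "T \<in> Tab f \<alpha>"
  shows "\<exists>g. HS g f \<and> sz g + \<alpha> n = sz f \<and> (\<exists>T'\<in>Tab g (\<alpha>(n:=0)). T = extT f g n T')"
proof -
  have sT: "ssytF f T" and cT: "contF f T = \<alpha>" using T by (auto simp: Tab_def)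
  have fin: "finite (cellsF f)" using finite_cellsF[OF fK] .
  have cTk: "card {c \<in> cellsF f. T c = k} = \<alpha> k" for k using cT unfolding contF_def by metis
  have le: "c \<in> cellsF f \<Longrightarrow> T c \<le> n" for c
  proof -
    assume c: "c \<in> cellsF f"
    have "\<alpha> (T c) \<noteq> 0" using tab_entry[OF sT cT c fin] .
    then show "T c \<le> n" using aN by (meson not_le)
  qed
  define g where "g i = card {j. j < f i \<and> T (i, j) < n}" for i
  have row: "{j. j < f i \<and> T (i, j) < n} = {..<g i}" for i
    unfolding g_def
  proof (rule downclosed_lessThan)
    show "finite {j. j < f i \<and> T (i, j) < n}" by simp
    fix j j' assume "j \<in> {j. j < f i \<and> T (i, j) < n}" "j' < j"
    then show "j' \<in> {j. j < f i \<and> T (i, j) < n}"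
      using row_mono[OF sT, of j i j'] by auto
  qed
  have cg: "cellsF g = {c \<in> cellsF f. T c < n}"
  proof -
    have "(i, j) \<in> cellsF g \<longleftrightarrow> (i, j) \<in> cellsF f \<and> T (i, j) < n" for i j
      using row[of i] by (auto simp: cellsF_def set_eq_iff)
    then show ?thesis by auto
  qed
  have HS: "HS g f"
    unfolding HS_def
  proof
    fix i
    have "{j. j < f i \<and> T (i, j) < n} \<subseteq> {..<f i}" by auto
    then have A: "g i \<le> f i" using row[of i] by (metis card_lessThan card_mono finite_lessThan)
    have "{..<f (Suc i)} \<subseteq> {j. j < f i \<and> T (i, j) < n}"
    proof
      fix j assume j: "j \<in> {..<f (Suc i)}"
      then have c1: "(Suc i, j) \<in> cellsF f" by (simp add: cellsF_def)
      have "T (i, j) < T (Suc i, j)" using sT c1 unfolding ssytF_def by simp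
      moreover have "T (Suc i, j) \<le> n" using le[OF c1] .
      moreover have "j < f i" using j fdec[rule_format, of i] by simp
      ultimately show "j \<in> {j. j < f i \<and> T (i, j) < n}" by simp
    qed
    then have "f (Suc i) \<le> g i" using row[of i] by (metis card_lessThan card_mono finite_lessThan)
    then show "f (Suc i) \<le> g i \<and> g i \<le> f i" using A by simp
  qed
  have gK: "\<forall>i\<ge>K. g i = 0" using HS_K[OF HS fK] .
  have sz: "sz g + \<alpha> n = sz f"
  proof -
    have "cellsF f = {c \<in> cellsF f. T c < n} \<union> {c \<in> cellsF f. T c = n}" using le by force
    moreover have "{c \<in> cellsF f. T c < n} \<inter> {c \<in> cellsF f. T c = n} = {}" by auto
    ultimately have "card (cellsF f) = card {c \<in> cellsF f. T c < n} + card {c \<in> cellsF f. T c = n}"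
      using fin by (metis (no_types, lifting) card_Un_disjoint finite_Un)
    also have "\<dots> = sz g + \<alpha> n"
    proof -
      have "card {c \<in> cellsF f. T c = n} = \<alpha> n" using cT unfolding contF_def by metis
      then show ?thesis using cg card_cellsF[OF gK] by simp
    qed
    finally show ?thesis using card_cellsF[OF fK] by simp
  qed
  define T' where "T' = (\<lambda>c. if c \<in> cellsF g then T c else 0)"
  have sub: "cellsF g \<subseteq> cellsF f" using HS_cells[OF HS] .
  have s2: "T' (i, j) \<le> T' (i, j + 1)" if "(i, j + 1) \<in> cellsF g" for i j
  proof -
    have "(i, j) \<in> cellsF g" using that by (simp add: cellsF_def)
    moreover have "(i, j + 1) \<in> cellsF f" using that sub by blast
    ultimately show ?thesis using that sT unfolding T'_def ssytF_def by simp
  qed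
  have s3: "T' (i, j) < T' (i + 1, j)" if "(i + 1, j) \<in> cellsF g" for i j
  proof -
    have "(i, j) \<in> cellsF g" using that HS_dec[OF HS, of i] by (simp add: cellsF_def)
    moreover have "(i + 1, j) \<in> cellsF f" using that sub by blast
    ultimately show ?thesis using that sT unfolding T'_def ssytF_def by simp
  qed
  have ss: "ssytF g T'" unfolding ssytF_def using s2 s3 by (auto simp: T'_def)
  have cont: "contF g T' k = (\<alpha>(n:=0)) k" for k
  proof -
    have e: "{c \<in> cellsF g. T' c = k} = {c \<in> cellsF g. T c = k}" by (auto simp: T'_def)
    show ?thesis
    proof (cases "k < n")
      case True
      have "{c \<in> cellsF g. T c = k} = {c \<in> cellsF f. T c = k}" using cg True by auto
      then show ?thesis using e cTk True by (simp add: contF_def)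
    next
      case False
      have "{c \<in> cellsF g. T c = k} = {}" using cg False by auto
      moreover have "(\<alpha>(n:=0)) k = 0" using False aN by simp
      ultimately show ?thesis unfolding contF_def e by (metis card.empty)
    qed
  qed
  have T'in: "T' \<in> Tab g (\<alpha>(n:=0))" using ss cont by (auto simp: Tab_def)
  have "T = extT f g n T'"
  proof
    fix c
    show "T c = extT f g n T' c"
    proof (cases "c \<in> cellsF g")
      case True then show ?thesis by (simp add: extT_def T'_def)
    next
      case False
      show ?thesis
      proof (cases "c \<in> cellsF f")
        case True
        then have "T c = n" using le[OF True] cg False by auto
        then show ?thesis using True False by (simp add: extT_def)
      next
        case F2: False
        then have "T c = 0" using sT unfolding ssytF_def by blast
        then show ?thesis using F2 False by (simp add: extT_def)
      qed
    qed
  qed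
  then show ?thesis using HS sz T'in by blast
qed

lemma dec_le: "\<forall>i. f (Suc i) \<le> f i \<Longrightarrow> i \<le> j \<Longrightarrow> f j \<le> (f i :: nat)"
  by (metis lift_Suc_antimono_le)

lemma finite_HS_below:
  assumes fK: "\<forall>i\<ge>K. f i = 0"
  shows "finite {g. HS g f \<and> P g}"
proof -
  have "{g. HS g f \<and> P g} \<subseteq> {h. (\<forall>x. x \<notin> {..<K} \<longrightarrow> h x = 0) \<and> (\<forall>x. h x \<le> f 0)}"
  proof
    fix g assume "g \<in> {g. HS g f \<and> P g}"
    then have h: "HS g f" by simp
    show "g \<in> {h. (\<forall>x. x \<notin> {..<K} \<longrightarrow> h x = 0) \<and> (\<forall>x. h x \<le> f 0)}"
    proof (intro CollectI conjI allI impI)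
      fix x
      show "x \<notin> {..<K} \<Longrightarrow> g x = 0" using HS_K[OF h fK] by simp
      have "g x \<le> f x" using h by (simp add: HS_def)
      also have "f x \<le> f 0" using dec_le[of f 0 x] HS_dec2[OF h] by simp
      finally show "g x \<le> f 0" .
    qed
  qed
  then show ?thesis using bounded_funs_finite[of "{..<K}" "f 0"] finite_subset by blast
qed

theorem branch:
  assumes fdec: "\<forall>i. f (Suc i) \<le> f i" and fK: "\<forall>i\<ge>K. f i = 0" and aN: "\<forall>k>n. \<alpha> k = 0"
  shows "schurF f \<alpha> = (\<Sum>g\<in>{g. HS g f \<and> sz g + \<alpha> n = sz f}. schurF g (\<alpha>(n:=0)))"
proof -
  define G where "G = {g. HS g f \<and> sz g + \<alpha> n = sz f}"
  define E where "E g = extT f g n ` Tab g (\<alpha>(n:=0))" for g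
  have finG: "finite G" unfolding G_def using finite_HS_below[OF fK] .
  have finT: "g \<in> G \<Longrightarrow> finite (Tab g (\<alpha>(n:=0)))" for g
  proof -
    assume "g \<in> G"
    then have gK: "\<forall>i\<ge>K. g i = 0" using HS_K[OF _ fK] by (auto simp: G_def)
    have "\<forall>t\<ge>n. (\<alpha>(n:=0)) t = 0" using aN by auto
    then show ?thesis using Tab_finite[OF gK] by blast
  qed
  have U: "Tab f \<alpha> = (\<Union>g\<in>G. E g)"
  proof
    show "Tab f \<alpha> \<subseteq> (\<Union>g\<in>G. E g)"
    proof
      fix T assume "T \<in> Tab f \<alpha>"
      then obtain g T' where "HS g f" "sz g + \<alpha> n = sz f" "T' \<in> Tab g (\<alpha>(n:=0))" "T = extT f g n T'"
        using decomp[OF fdec fK aN] by blast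
      then show "T \<in> (\<Union>g\<in>G. E g)" by (auto simp: G_def E_def)
    qed
    show "(\<Union>g\<in>G. E g) \<subseteq> Tab f \<alpha>" using ext_in[OF _ _ fK aN] by (auto simp: G_def E_def)
  qed
  have disj: "\<forall>g1\<in>G. \<forall>g2\<in>G. g1 \<noteq> g2 \<longrightarrow> E g1 \<inter> E g2 = {}"
  proof (intro ballI impI)
    fix g1 g2 assume g: "g1 \<in> G" "g2 \<in> G" "g1 \<noteq> g2"
    show "E g1 \<inter> E g2 = {}"
    proof (rule ccontr)
      assume "E g1 \<inter> E g2 \<noteq> {}"
      then obtain T1 T2 where T: "T1 \<in> Tab g1 (\<alpha>(n:=0))" "T2 \<in> Tab g2 (\<alpha>(n:=0))"
        "extT f g1 n T1 = extT f g2 n T2" by (auto simp: E_def)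
      have "cellsF g1 = cellsF g2"
        using ext_recover[OF _ fK aN T(1)] ext_recover[OF _ fK aN T(2)] g T(3) by (auto simp: G_def)
      then show False using cellsF_inj g(3) by blast
    qed
  qed
  have "card (Tab f \<alpha>) = (\<Sum>g\<in>G. card (E g))"
    unfolding U using finG finT disj by (intro card_UN_disjoint) (auto simp: E_def)
  also have "\<dots> = (\<Sum>g\<in>G. card (Tab g (\<alpha>(n:=0))))"
  proof (rule sum.cong)
    fix g assume "g \<in> G"
    have "inj_on (extT f g n) (Tab g (\<alpha>(n:=0)))" using ext_inj by (meson inj_onI)
    then show "card (E g) = card (Tab g (\<alpha>(n:=0)))" by (simp add: E_def card_image)
  qed simp
  finally show ?thesis unfolding schurF_def G_def by simp
qed

lemma sz_mono:
  assumes "\<forall>i. f i \<le> g i" "\<forall>i\<ge>K. g i = 0"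
  shows "sz f \<le> sz g"
proof -
  have fK: "\<forall>i\<ge>K. f i = 0" using assms by (metis le_zero_eq)
  show ?thesis unfolding sz_eq[OF fK] sz_eq[OF assms(2)] using assms(1) by (simp add: sum_mono)
qed

lemma size_identity:
  fixes l \<rho> \<mu> \<nu> :: "nat \<Rightarrow> nat"
  assumes pw: "\<forall>i. l (Suc i) + \<rho> i = max (\<mu> (Suc i)) (\<nu> (Suc i)) + min (\<mu> i) (\<nu> i)"
    and K: "\<forall>i\<ge>K. \<mu> i = 0" "\<forall>i\<ge>K. \<nu> i = 0" "\<forall>i\<ge>K. \<rho> i = 0"
  shows "sz l + sz \<rho> + max (\<mu> 0) (\<nu> 0) = l 0 + sz \<mu> + sz \<nu>"
proof -
  have lK: "\<forall>i\<ge>Suc K. l i = 0"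
  proof (intro allI impI)
    fix i assume "Suc K \<le> i"
    then obtain j where j: "i = Suc j" "K \<le> j" by (metis Suc_le_D Suc_le_mono)
    show "l i = 0" using pw[rule_format, of j] K j by simp
  qed
  have "sz l = l 0 + (\<Sum>i<K. l (Suc i))"
    unfolding sz_eq[OF lK] by (rule sum.lessThan_Suc_shift)
  moreover have "(\<Sum>i<K. l (Suc i)) + sz \<rho> = (\<Sum>i<K. max (\<mu> (Suc i)) (\<nu> (Suc i))) + (\<Sum>i<K. min (\<mu> i) (\<nu> i))"
    unfolding sz_eq[OF K(3)] using pw by (simp add: sum.distrib[symmetric])
  moreover have "max (\<mu> 0) (\<nu> 0) + (\<Sum>i<K. max (\<mu> (Suc i)) (\<nu> (Suc i))) = (\<Sum>i<K. max (\<mu> i) (\<nu> i))"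
  proof -
    have "max (\<mu> 0) (\<nu> 0) + (\<Sum>i<K. max (\<mu> (Suc i)) (\<nu> (Suc i))) = (\<Sum>i<Suc K. max (\<mu> i) (\<nu> i))"
      by (rule sum.lessThan_Suc_shift[symmetric])
    also have "\<dots> = (\<Sum>i<K. max (\<mu> i) (\<nu> i))" using K by simp
    finally show ?thesis .
  qed
  moreover have "(\<Sum>i<K. max (\<mu> i) (\<nu> i)) + (\<Sum>i<K. min (\<mu> i) (\<nu> i)) = sz \<mu> + sz \<nu>"
  proof -
    have "(\<Sum>i<K. max (\<mu> i) (\<nu> i)) + (\<Sum>i<K. min (\<mu> i) (\<nu> i)) = (\<Sum>i<K. \<mu> i + \<nu> i)"
      unfolding sum.distrib[symmetric] by (rule sum.cong) (auto simp: max_def min_def)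
    then show ?thesis unfolding sz_eq[OF K(1)] sz_eq[OF K(2)] by (simp add: sum.distrib)
  qed
  ultimately show ?thesis by linarith
qed

definition phiL :: "(nat \<Rightarrow> nat) \<Rightarrow> nat \<Rightarrow> nat \<Rightarrow> (nat \<Rightarrow> nat) \<Rightarrow> (nat \<Rightarrow> nat) \<Rightarrow> (nat \<Rightarrow> nat)" where
  "phiL \<mu> m k \<rho> \<nu> = (\<lambda>i. if i = 0 then max (\<mu> 0) (\<nu> 0) + (m - k)
        else max (\<mu> i) (\<nu> i) + min (\<mu> (i - 1)) (\<nu> (i - 1)) - \<rho> (i - 1))"

definition psiR :: "(nat \<Rightarrow> nat) \<Rightarrow> (nat \<Rightarrow> nat) \<Rightarrow> (nat \<Rightarrow> nat) \<Rightarrow> (nat \<Rightarrow> nat)" where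
  "psiR \<mu> l \<nu> = (\<lambda>i. max (\<mu> (Suc i)) (\<nu> (Suc i)) + min (\<mu> i) (\<nu> i) - l (Suc i))"

definition Xset :: "(nat \<Rightarrow> nat) \<Rightarrow> nat \<Rightarrow> nat \<Rightarrow> (nat \<times> (nat \<Rightarrow> nat) \<times> (nat \<Rightarrow> nat)) set" where
  "Xset \<mu> m a = Sigma {k. k \<le> m \<and> m - k \<le> a}
     (\<lambda>k. Sigma {\<rho>. HS \<rho> \<mu> \<and> sz \<rho> + k = sz \<mu>} (\<lambda>\<rho>. {\<nu>. HS \<rho> \<nu> \<and> sz \<nu> = sz \<rho> + (a - (m - k))}))"

definition Yset :: "(nat \<Rightarrow> nat) \<Rightarrow> nat \<Rightarrow> nat \<Rightarrow> ((nat \<Rightarrow> nat) \<times> (nat \<Rightarrow> nat)) set" where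
  "Yset \<mu> m a = Sigma {l. HS \<mu> l \<and> sz l = sz \<mu> + a} (\<lambda>l. {\<nu>. HS \<nu> l \<and> sz \<nu> + m = sz l})"

lemma fwd:
  assumes K: "\<forall>i\<ge>K. \<mu> i = 0" and x: "(k, \<rho>, \<nu>) \<in> Xset \<mu> m a"
  shows "(phiL \<mu> m k \<rho> \<nu>, \<nu>) \<in> Yset \<mu> m a" "psiR \<mu> (phiL \<mu> m k \<rho> \<nu>) \<nu> = \<rho>"
    "m - (phiL \<mu> m k \<rho> \<nu> 0 - max (\<mu> 0) (\<nu> 0)) = k"
proof -
  let ?l = "phiL \<mu> m k \<rho> \<nu>"
  have k: "k \<le> m" "m - k \<le> a" and h1: "HS \<rho> \<mu>" and s1: "sz \<rho> + k = sz \<mu>"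
    and h2: "HS \<rho> \<nu>" and s2: "sz \<nu> = sz \<rho> + (a - (m - k))" using x by (auto simp: Xset_def)
  have r1: "max (\<mu> (Suc i)) (\<nu> (Suc i)) \<le> \<rho> i" "\<rho> i \<le> min (\<mu> i) (\<nu> i)" for i
    using h1 h2 unfolding HS_def by auto
  have lS: "?l (Suc i) = max (\<mu> (Suc i)) (\<nu> (Suc i)) + min (\<mu> i) (\<nu> i) - \<rho> i" for i
    by (simp add: phiL_def)
  have l0: "?l 0 = max (\<mu> 0) (\<nu> 0) + (m - k)" by (simp add: phiL_def)
  have pw: "\<forall>i. ?l (Suc i) + \<rho> i = max (\<mu> (Suc i)) (\<nu> (Suc i)) + min (\<mu> i) (\<nu> i)"
    using r1 lS by (metis le_add2 le_add_diff_inverse2 le_trans)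
  have lb: "max (\<mu> (Suc i)) (\<nu> (Suc i)) \<le> ?l (Suc i)" "?l (Suc i) \<le> min (\<mu> i) (\<nu> i)" for i
    using r1[of i] lS[of i] by auto
  have HSl: "HS \<mu> ?l \<and> HS \<nu> ?l"
    unfolding HS_def
  proof (intro conjI allI)
    fix i
    show "?l (Suc i) \<le> \<mu> i" "?l (Suc i) \<le> \<nu> i" using lb(2)[of i] by auto
    show "\<mu> i \<le> ?l i" "\<nu> i \<le> ?l i"
    proof -
      have "\<mu> i \<le> ?l i \<and> \<nu> i \<le> ?l i"
      proof (cases i)
        case 0 then show ?thesis using l0 by auto
      next
        case (Suc j) then show ?thesis using lb(1)[of j] by auto
      qed
      then show "\<mu> i \<le> ?l i" "\<nu> i \<le> ?l i" by auto
    qed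
  qed
  have rK: "\<forall>i\<ge>Suc K. \<rho> i = 0" using h1 K unfolding HS_def by (metis Suc_leD le_zero_eq)
  have nK: "\<forall>i\<ge>Suc K. \<nu> i = 0"
  proof (intro allI impI)
    fix i assume "Suc K \<le> i"
    then obtain j where j: "i = Suc j" "K \<le> j" by (metis Suc_le_D Suc_le_mono)
    have "\<rho> j = 0" using h1 K j unfolding HS_def by (metis le_zero_eq)
    moreover have "\<nu> (Suc j) \<le> \<rho> j" using h2 unfolding HS_def by blast
    ultimately show "\<nu> i = 0" using j by simp
  qed
  have mK: "\<forall>i\<ge>Suc K. \<mu> i = 0" using K by simp
  have I: "sz ?l + sz \<rho> + max (\<mu> 0) (\<nu> 0) = ?l 0 + sz \<mu> + sz \<nu>"
    using size_identity[OF pw mK nK rK] .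
  have szl: "sz ?l = sz \<mu> + a" using I l0 s2 k by linarith
  have szn: "sz \<nu> + m = sz ?l" using szl s1 s2 k by linarith
  show "(?l, \<nu>) \<in> Yset \<mu> m a" unfolding Yset_def mem_Sigma_iff mem_Collect_eq using HSl szl szn by blast
  show "psiR \<mu> ?l \<nu> = \<rho>"
  proof
    fix i
    have "psiR \<mu> ?l \<nu> i = max (\<mu> (Suc i)) (\<nu> (Suc i)) + min (\<mu> i) (\<nu> i) - ?l (Suc i)"
      by (simp only: psiR_def)
    then show "psiR \<mu> ?l \<nu> i = \<rho> i" using pw[rule_format, of i] by linarith
  qed
  show "m - (?l 0 - max (\<mu> 0) (\<nu> 0)) = k" using l0 k by simp
qed

lemma bwd:
  assumes K: "\<forall>i\<ge>K. \<mu> i = 0" and y: "(l, \<nu>) \<in> Yset \<mu> m a"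
  shows "(m - (l 0 - max (\<mu> 0) (\<nu> 0)), psiR \<mu> l \<nu>, \<nu>) \<in> Xset \<mu> m a"
    "phiL \<mu> m (m - (l 0 - max (\<mu> 0) (\<nu> 0))) (psiR \<mu> l \<nu>) \<nu> = l"
proof -
  let ?\<rho> = "psiR \<mu> l \<nu>"
  let ?k = "m - (l 0 - max (\<mu> 0) (\<nu> 0))"
  have h1: "HS \<mu> l" and s1: "sz l = sz \<mu> + a" and h2: "HS \<nu> l" and s2: "sz \<nu> + m = sz l"
    using y by (auto simp: Yset_def)
  have r1: "max (\<mu> (Suc i)) (\<nu> (Suc i)) \<le> l (Suc i)" "l (Suc i) \<le> min (\<mu> i) (\<nu> i)" for i
    using h1 h2 unfolding HS_def by auto
  have rS: "?\<rho> i = max (\<mu> (Suc i)) (\<nu> (Suc i)) + min (\<mu> i) (\<nu> i) - l (Suc i)" for i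
    by (simp add: psiR_def)
  have pw: "\<forall>i. l (Suc i) + ?\<rho> i = max (\<mu> (Suc i)) (\<nu> (Suc i)) + min (\<mu> i) (\<nu> i)"
    using r1 rS by (metis le_add2 le_add_diff_inverse le_trans)
  have rb: "max (\<mu> (Suc i)) (\<nu> (Suc i)) \<le> ?\<rho> i" "?\<rho> i \<le> min (\<mu> i) (\<nu> i)" for i
    using r1[of i] rS[of i] by auto
  have HSr: "HS ?\<rho> \<mu>" "HS ?\<rho> \<nu>" unfolding HS_def using rb by fastforce+
  have l0: "max (\<mu> 0) (\<nu> 0) \<le> l 0" using h1 h2 unfolding HS_def by auto
  have rK: "\<forall>i\<ge>Suc K. ?\<rho> i = 0" using HSr(1) K unfolding HS_def by (metis Suc_leD le_zero_eq)
  have nK: "\<forall>i\<ge>Suc K. \<nu> i = 0"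
  proof (intro allI impI)
    fix i assume "Suc K \<le> i"
    then obtain j where j: "i = Suc j" "K \<le> j" by (metis Suc_le_D Suc_le_mono)
    have "l (Suc j) \<le> \<mu> j" using h1 unfolding HS_def by blast
    moreover have "\<nu> (Suc j) \<le> l (Suc j)" using h2 unfolding HS_def by blast
    ultimately show "\<nu> i = 0" using j K by simp
  qed
  have mK: "\<forall>i\<ge>Suc K. \<mu> i = 0" using K by simp
  have I: "sz l + sz ?\<rho> + max (\<mu> 0) (\<nu> 0) = l 0 + sz \<mu> + sz \<nu>"
    using size_identity[OF pw mK nK rK] .
  have le1: "sz ?\<rho> \<le> sz \<mu>" using sz_mono[OF _ mK] HSr(1) unfolding HS_def by blast
  have le2: "sz ?\<rho> \<le> sz \<nu>" using sz_mono[OF _ nK] HSr(2) unfolding HS_def by blast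
  have e1: "sz ?\<rho> + ?k = sz \<mu>" using I s1 s2 l0 le1 le2 by linarith
  have e2: "?k \<le> m" "m - ?k \<le> a" using I s1 s2 l0 le1 le2 by linarith+
  have e3: "sz \<nu> = sz ?\<rho> + (a - (m - ?k))" using I s1 s2 l0 le1 le2 by linarith
  show "(?k, ?\<rho>, \<nu>) \<in> Xset \<mu> m a" unfolding Xset_def mem_Sigma_iff mem_Collect_eq using e1 e2 e3 HSr by blast
  have mk: "m - ?k = l 0 - max (\<mu> 0) (\<nu> 0)" using I s1 s2 l0 le1 le2 by linarith
  show "phiL \<mu> m ?k ?\<rho> \<nu> = l"
  proof
    fix i show "phiL \<mu> m ?k ?\<rho> \<nu> i = l i"
    proof (cases i)
      case 0 then show ?thesis using mk l0 by (simp add: phiL_def)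
    next
      case (Suc j) then show ?thesis using pw[rule_format, of j] by (simp add: phiL_def)
    qed
  qed
qed

lemma h_fin: assumes "\<forall>i\<ge>N. \<alpha> i = 0"
  shows "complete_h k \<alpha> = (if (\<Sum>i<N. \<alpha> i) = k then 1 else 0)"
proof -
  have fin: "finite {i. \<alpha> i \<noteq> 0}"
    using assms by (metis (mono_tags, lifting) finite_lessThan finite_subset lessThan_iff mem_Collect_eq not_le subsetI)
  have "(\<Sum>i\<in>{i. \<alpha> i \<noteq> 0}. \<alpha> i) = (\<Sum>i<N. \<alpha> i)" using sz_eq[OF assms] by (simp add: sz_def)
  then show ?thesis using fin by (simp add: complete_h_def)
qed

lemma h_branch: assumes "\<forall>k>n. \<alpha> k = 0"
  shows "complete_h a \<alpha> = (if \<alpha> n \<le> a then complete_h (a - \<alpha> n) (\<alpha>(n:=0)) else 0)"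
proof -
  have A: "\<forall>i\<ge>Suc n. \<alpha> i = 0" using assms by simp
  have B: "\<forall>i\<ge>Suc n. (\<alpha>(n:=0)) i = 0" using assms by simp
  have s1: "(\<Sum>i<Suc n. \<alpha> i) = (\<Sum>i<n. \<alpha> i) + \<alpha> n" by simp
  have s2: "(\<Sum>i<Suc n. (\<alpha>(n:=0)) i) = (\<Sum>i<n. \<alpha> i)" by simp
  show ?thesis unfolding h_fin[OF A] h_fin[OF B] s1 s2 by auto
qed

lemma schurF_zero: assumes "\<forall>i\<ge>K. f i = 0"
  shows "schurF f (\<lambda>_. 0) = (if f = (\<lambda>_. 0) then 1 else 0)"
proof (cases "f = (\<lambda>_. 0)")
  case True
  have "Tab f (\<lambda>_. 0) = {\<lambda>_. 0}"
  proof
    show "Tab f (\<lambda>_. 0) \<subseteq> {\<lambda>_. 0}"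
    proof
      fix T assume "T \<in> Tab f (\<lambda>_. 0)"
      then have "\<forall>c. T c = 0" using True unfolding Tab_def ssytF_def cellsF_def by auto
      then show "T \<in> {\<lambda>_. 0}" by auto
    qed
    show "{\<lambda>_. 0} \<subseteq> Tab f (\<lambda>_. 0)" using True
      by (auto simp: Tab_def ssytF_def cellsF_def contF_def)
  qed
  then show ?thesis using True by (simp add: schurF_def)
next
  case False
  then obtain i where i: "f i \<noteq> 0" by auto
  have "Tab f (\<lambda>_. 0) = {}"
  proof (rule ccontr)
    assume "Tab f (\<lambda>_. 0) \<noteq> {}"
    then obtain T where "ssytF f T" "contF f T = (\<lambda>_. 0)" by (auto simp: Tab_def)
    moreover have "(i, 0) \<in> cellsF f" using i by (simp add: cellsF_def)
    ultimately show False using tab_entry finite_cellsF[OF assms] by fastforce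
  qed
  then show ?thesis using False by (simp add: schurF_def)
qed

lemma h_zero: "complete_h a (\<lambda>_. 0) = (if a = 0 then 1 else 0)"
  using h_fin[of 0 "\<lambda>_. 0" a] by simp

lemma sf_mult_zero: "sf_mult F H (\<lambda>_. 0) = F (\<lambda>_. 0) * H (\<lambda>_. 0)"
proof -
  have "{\<beta>::nat\<Rightarrow>nat. \<forall>i. \<beta> i \<le> 0} = {\<lambda>_. 0}" by auto
  then show ?thesis by (simp add: sf_mult_def)
qed

lemma finite_HS_above:
  assumes K: "\<forall>i\<ge>K. \<rho> i = 0"
  shows "finite {\<nu>. HS \<rho> \<nu> \<and> sz \<nu> = N}"
proof -
  have "{\<nu>. HS \<rho> \<nu> \<and> sz \<nu> = N} \<subseteq> {h. (\<forall>x. x \<notin> {..<Suc K} \<longrightarrow> h x = 0) \<and> (\<forall>x. h x \<le> N)}"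
  proof
    fix \<nu> assume "\<nu> \<in> {\<nu>. HS \<rho> \<nu> \<and> sz \<nu> = N}"
    then have h: "HS \<rho> \<nu>" and s: "sz \<nu> = N" by auto
    have nK: "\<forall>i\<ge>Suc K. \<nu> i = 0"
    proof (intro allI impI)
      fix i assume "Suc K \<le> i"
      then obtain j where j: "i = Suc j" "K \<le> j" by (metis Suc_le_D Suc_le_mono)
      have "\<nu> (Suc j) \<le> \<rho> j" using h unfolding HS_def by blast
      then show "\<nu> i = 0" using j K by simp
    qed
    show "\<nu> \<in> {h. (\<forall>x. x \<notin> {..<Suc K} \<longrightarrow> h x = 0) \<and> (\<forall>x. h x \<le> N)}"
    proof (intro CollectI conjI allI impI)
      fix x
      show "x \<notin> {..<Suc K} \<Longrightarrow> \<nu> x = 0" using nK by simp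
      have "\<nu> x \<le> \<nu> 0" using dec_le[of \<nu> 0 x] HS_dec2[OF h] by simp
      also have "\<nu> 0 \<le> (\<Sum>i<Suc K. \<nu> i)" by (rule member_le_sum) auto
      also have "\<dots> = N" using sz_eq[OF nK] s by simp
      finally show "\<nu> x \<le> N" .
    qed
  qed
  then show ?thesis using bounded_funs_finite[of "{..<Suc K}" N] finite_subset by blast
qed

lemma HS_K_above:
  assumes "HS \<rho> \<nu>" "\<forall>i\<ge>K. \<rho> i = 0" shows "\<forall>i\<ge>Suc K. \<nu> i = 0"
proof (intro allI impI)
  fix i assume "Suc K \<le> i"
  then obtain j where j: "i = Suc j" "K \<le> j" by (metis Suc_le_D Suc_le_mono)
  have "\<nu> (Suc j) \<le> \<rho> j" using assms(1) unfolding HS_def by blast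
  then show "\<nu> i = 0" using j assms(2) by simp
qed

lemma sum_Sigma': "finite A \<Longrightarrow> \<forall>x\<in>A. finite (B x) \<Longrightarrow> (\<Sum>z\<in>Sigma A B. g z) = (\<Sum>x\<in>A. \<Sum>y\<in>B x. g (x, y))"
  using sum.Sigma[of A B "\<lambda>x y. g (x, y)"] by simp

lemma comb_sum:
  fixes F :: "(nat \<Rightarrow> nat) \<Rightarrow> int"
  assumes K: "\<forall>i\<ge>K. \<mu> i = 0"
  shows "(\<Sum>k\<in>{k. k \<le> m \<and> m - k \<le> a}. \<Sum>\<rho>\<in>{\<rho>. HS \<rho> \<mu> \<and> sz \<rho> + k = sz \<mu>}.
           \<Sum>\<nu>\<in>{\<nu>. HS \<rho> \<nu> \<and> sz \<nu> = sz \<rho> + (a - (m - k))}. F \<nu>)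
       = (\<Sum>l\<in>{l. HS \<mu> l \<and> sz l = sz \<mu> + a}. \<Sum>\<nu>\<in>{\<nu>. HS \<nu> l \<and> sz \<nu> + m = sz l}. F \<nu>)"
proof -
  have f1: "finite {k. k \<le> m \<and> m - k \<le> a}" by (rule finite_subset[of _ "{..m}"]) auto
  have f2: "finite {\<rho>. HS \<rho> \<mu> \<and> sz \<rho> + k = sz \<mu>}" for k using finite_HS_below[OF K] .
  have f3: "finite {\<nu>. HS \<rho> \<nu> \<and> sz \<nu> = N}" if "HS \<rho> \<mu>" for \<rho> N
    using finite_HS_above[OF HS_K[OF that K]] .
  have f4: "finite {l. HS \<mu> l \<and> sz l = sz \<mu> + a}" using finite_HS_above[OF K] .
  have f5: "finite {\<nu>. HS \<nu> l \<and> P \<nu>}" if "HS \<mu> l" for l P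
    using finite_HS_below[OF HS_K_above[OF that K]] .
  have L: "(\<Sum>k\<in>{k. k \<le> m \<and> m - k \<le> a}. \<Sum>\<rho>\<in>{\<rho>. HS \<rho> \<mu> \<and> sz \<rho> + k = sz \<mu>}.
           \<Sum>\<nu>\<in>{\<nu>. HS \<rho> \<nu> \<and> sz \<nu> = sz \<rho> + (a - (m - k))}. F \<nu>) = (\<Sum>x\<in>Xset \<mu> m a. F (snd (snd x)))"
  proof -
    have "(\<Sum>x\<in>(SIGMA k:{k. k \<le> m \<and> m - k \<le> a}. SIGMA \<rho>:{\<rho>. HS \<rho> \<mu> \<and> sz \<rho> + k = sz \<mu>}.
             {\<nu>. HS \<rho> \<nu> \<and> sz \<nu> = sz \<rho> + (a - (m - k))}). F (snd (snd x)))
      = (\<Sum>k\<in>{k. k \<le> m \<and> m - k \<le> a}. \<Sum>p\<in>(SIGMA \<rho>:{\<rho>. HS \<rho> \<mu> \<and> sz \<rho> + k = sz \<mu>}.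
             {\<nu>. HS \<rho> \<nu> \<and> sz \<nu> = sz \<rho> + (a - (m - k))}). F (snd p))"
      by (subst sum_Sigma') (auto intro!: f1 finite_SigmaI f2 f3)
    also have "\<dots> = (\<Sum>k\<in>{k. k \<le> m \<and> m - k \<le> a}. \<Sum>\<rho>\<in>{\<rho>. HS \<rho> \<mu> \<and> sz \<rho> + k = sz \<mu>}.
           \<Sum>\<nu>\<in>{\<nu>. HS \<rho> \<nu> \<and> sz \<nu> = sz \<rho> + (a - (m - k))}. F \<nu>)"
      by (rule sum.cong[OF refl], subst sum_Sigma') (auto intro!: f2 f3)
    finally show ?thesis unfolding Xset_def by (rule sym)
  qed
  have R: "(\<Sum>l\<in>{l. HS \<mu> l \<and> sz l = sz \<mu> + a}. \<Sum>\<nu>\<in>{\<nu>. HS \<nu> l \<and> sz \<nu> + m = sz l}. F \<nu>)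
        = (\<Sum>y\<in>Yset \<mu> m a. F (snd y))"
    unfolding Yset_def by (subst sum_Sigma') (auto intro!: f4 f5)
  have bij: "bij_betw (\<lambda>(k, \<rho>, \<nu>). (phiL \<mu> m k \<rho> \<nu>, \<nu>)) (Xset \<mu> m a) (Yset \<mu> m a)"
  proof (rule bij_betw_byWitness[where f' = "\<lambda>(l, \<nu>). (m - (l 0 - max (\<mu> 0) (\<nu> 0)), psiR \<mu> l \<nu>, \<nu>)"])
    show "\<forall>x\<in>Xset \<mu> m a. (\<lambda>(l, \<nu>). (m - (l 0 - max (\<mu> 0) (\<nu> 0)), psiR \<mu> l \<nu>, \<nu>))
            ((\<lambda>(k, \<rho>, \<nu>). (phiL \<mu> m k \<rho> \<nu>, \<nu>)) x) = x"
      using fwd(2,3)[OF K] by auto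
    show "\<forall>y\<in>Yset \<mu> m a. (\<lambda>(k, \<rho>, \<nu>). (phiL \<mu> m k \<rho> \<nu>, \<nu>))
            ((\<lambda>(l, \<nu>). (m - (l 0 - max (\<mu> 0) (\<nu> 0)), psiR \<mu> l \<nu>, \<nu>)) y) = y"
      using bwd(2)[OF K] by auto
    show "(\<lambda>(k, \<rho>, \<nu>). (phiL \<mu> m k \<rho> \<nu>, \<nu>)) ` Xset \<mu> m a \<subseteq> Yset \<mu> m a"
      using fwd(1)[OF K] by auto
    show "(\<lambda>(l, \<nu>). (m - (l 0 - max (\<mu> 0) (\<nu> 0)), psiR \<mu> l \<nu>, \<nu>)) ` Yset \<mu> m a \<subseteq> Xset \<mu> m a"
      using bwd(1)[OF K] by auto
  qed
  have "(\<Sum>y\<in>Yset \<mu> m a. F (snd y)) = (\<Sum>x\<in>Xset \<mu> m a. F (snd ((\<lambda>(k, \<rho>, \<nu>). (phiL \<mu> m k \<rho> \<nu>, \<nu>)) x)))"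
    using sum.reindex_bij_betw[OF bij, of "\<lambda>y. F (snd y)"] by simp
  also have "\<dots> = (\<Sum>x\<in>Xset \<mu> m a. F (snd (snd x)))" by (rule sum.cong) auto
  finally show ?thesis using L R by simp
qed

lemma sf_split:
  assumes "\<forall>k>n. \<alpha> k = 0"
  shows "sf_mult F H \<alpha> = (\<Sum>k\<le>\<alpha> n. \<Sum>\<beta>\<in>{\<beta>. \<forall>i. \<beta> i \<le> (\<alpha>(n:=0)) i}. F (\<beta>(n:=k)) * H (\<lambda>i. \<alpha> i - (\<beta>(n:=k)) i))"
proof -
  define LE' where "LE' = {\<beta>::nat\<Rightarrow>nat. \<forall>i. \<beta> i \<le> (\<alpha>(n:=0)) i}"
  define LE where "LE = {\<beta>::nat\<Rightarrow>nat. \<forall>i. \<beta> i \<le> \<alpha> i}"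
  define g where "g \<beta> = F \<beta> * H (\<lambda>i. \<alpha> i - \<beta> i)" for \<beta>
  have bij: "bij_betw (\<lambda>(k, \<beta>). \<beta>(n:=k)) ({..\<alpha> n} \<times> LE') LE"
  proof (rule bij_betw_byWitness[where f' = "\<lambda>\<beta>. (\<beta> n, \<beta>(n:=0))"])
    show "\<forall>x\<in>{..\<alpha> n} \<times> LE'. (\<lambda>\<beta>. (\<beta> n, \<beta>(n:=0))) ((\<lambda>(k, \<beta>). \<beta>(n:=k)) x) = x"
    proof
      fix x assume x: "x \<in> {..\<alpha> n} \<times> LE'"
      obtain k \<beta> where kb: "x = (k, \<beta>)" by (cases x)
      have "\<beta> n \<le> 0" using x kb unfolding LE'_def by (metis SigmaD2 fun_upd_same mem_Collect_eq)
      then have "\<beta>(n:=0) = \<beta>" by (simp add: fun_upd_idem)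
      then show "(\<lambda>\<beta>. (\<beta> n, \<beta>(n:=0))) ((\<lambda>(k, \<beta>). \<beta>(n:=k)) x) = x" using kb by simp
    qed
    show "\<forall>y\<in>LE. (\<lambda>(k, \<beta>). \<beta>(n:=k)) ((\<lambda>\<beta>. (\<beta> n, \<beta>(n:=0))) y) = y" by simp
    show "(\<lambda>(k, \<beta>). \<beta>(n:=k)) ` ({..\<alpha> n} \<times> LE') \<subseteq> LE"
      unfolding LE_def LE'_def by (auto split: if_splits)
    show "(\<lambda>\<beta>. (\<beta> n, \<beta>(n:=0))) ` LE \<subseteq> {..\<alpha> n} \<times> LE'"
      unfolding LE_def LE'_def by auto
  qed
  have "(\<Sum>k\<le>\<alpha> n. \<Sum>\<beta>\<in>LE'. g (\<beta>(n:=k))) = (\<Sum>x\<in>{..\<alpha> n} \<times> LE'. g ((\<lambda>(k, \<beta>). \<beta>(n:=k)) x))"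
    by (subst sum.cartesian_product) (simp add: case_prod_beta)
  also have "\<dots> = sum g LE" by (rule sum.reindex_bij_betw[OF bij])
  finally show ?thesis unfolding sf_mult_def LE_def LE'_def g_def by simp
qed

definition PS :: "(nat \<Rightarrow> nat) \<Rightarrow> nat \<Rightarrow> (nat \<Rightarrow> nat) set" where
  "PS \<mu> a = {l. HS \<mu> l \<and> sz l = sz \<mu> + a}"

lemma pieri_fin:
  "\<forall>\<mu> K a \<alpha>. (\<forall>i. \<mu> (Suc i) \<le> \<mu> i) \<longrightarrow> (\<forall>i\<ge>K. \<mu> i = 0) \<longrightarrow> (\<forall>k\<ge>n. \<alpha> k = 0) \<longrightarrow>
     sf_mult (schurF \<mu>) (complete_h a) \<alpha> = (\<Sum>l\<in>PS \<mu> a. schurF l \<alpha>)"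
proof (induction n)
  case 0
  show ?case
  proof (intro allI impI)
    fix \<mu> :: "nat \<Rightarrow> nat" and K a and \<alpha> :: "nat \<Rightarrow> nat"
    assume dec: "\<forall>i. \<mu> (Suc i) \<le> \<mu> i" and K: "\<forall>i\<ge>K. \<mu> i = 0" and a0: "\<forall>k\<ge>0. \<alpha> k = 0"
    have az: "\<alpha> = (\<lambda>_. 0)" using a0 by auto
    have fin: "finite (PS \<mu> a)" unfolding PS_def using finite_HS_above[OF K] .
    have "(\<Sum>l\<in>PS \<mu> a. schurF l (\<lambda>_. 0)) = (\<Sum>l\<in>PS \<mu> a. if l = (\<lambda>_. 0) then 1 else 0)"
    proof (rule sum.cong[OF refl])
      fix l assume "l \<in> PS \<mu> a"
      then have "\<forall>i\<ge>Suc K. l i = 0" using HS_K_above[OF _ K] by (auto simp: PS_def)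
      then show "schurF l (\<lambda>_. 0) = (if l = (\<lambda>_. 0) then 1 else 0)" by (rule schurF_zero)
    qed
    also have "\<dots> = (if (\<lambda>_. 0) \<in> PS \<mu> a then 1 else 0)" using fin by (simp add: sum.delta')
    also have "\<dots> = (if \<mu> = (\<lambda>_. 0) \<and> a = 0 then 1 else 0)"
    proof -
      have sz0: "sz (\<lambda>_. 0) = 0" by (simp add: sz_def)
      have "HS \<mu> (\<lambda>_. 0) \<longleftrightarrow> \<mu> = (\<lambda>_. 0)" by (auto simp: HS_def)
      moreover have "\<mu> = (\<lambda>_. 0) \<Longrightarrow> sz \<mu> = 0" using sz0 by simp
      ultimately show ?thesis using sz0 by (auto simp: PS_def)
    qed
    finally show "sf_mult (schurF \<mu>) (complete_h a) \<alpha> = (\<Sum>l\<in>PS \<mu> a. schurF l \<alpha>)"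
      unfolding az sf_mult_zero schurF_zero[OF K] h_zero by simp
  qed
next
  case (Suc n)
  show ?case
  proof (intro allI impI)
    fix \<mu> :: "nat \<Rightarrow> nat" and K a and \<alpha> :: "nat \<Rightarrow> nat"
    assume dec: "\<forall>i. \<mu> (Suc i) \<le> \<mu> i" and K: "\<forall>i\<ge>K. \<mu> i = 0" and aN: "\<forall>k\<ge>Suc n. \<alpha> k = 0"
    define m where "m = \<alpha> n"
    define \<alpha>' where "\<alpha>' = \<alpha>(n:=0)"
    have aN': "\<forall>k>n. \<alpha> k = 0" using aN by simp
    have a'N: "\<forall>k\<ge>n. \<alpha>' k = 0" using aN by (simp add: \<alpha>'_def)
    define R where "R k = {\<rho>. HS \<rho> \<mu> \<and> sz \<rho> + k = sz \<mu>}" for k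
    define LE' where "LE' = {\<beta>::nat\<Rightarrow>nat. \<forall>i. \<beta> i \<le> \<alpha>' i}"
    have step1: "sf_mult (schurF \<mu>) (complete_h a) \<alpha> =
       (\<Sum>k\<le>m. \<Sum>\<beta>\<in>LE'. schurF \<mu> (\<beta>(n:=k)) * complete_h a (\<lambda>i. \<alpha> i - (\<beta>(n:=k)) i))"
      using sf_split[OF aN'] unfolding m_def LE'_def \<alpha>'_def by simp
    have br: "schurF \<mu> (\<beta>(n:=k)) = (\<Sum>\<rho>\<in>R k. schurF \<rho> \<beta>)" if "\<beta> \<in> LE'" for \<beta> k
    proof -
      have bn: "\<forall>j\<ge>n. \<beta> j = 0"
      proof (intro allI impI)
        fix j assume j: "n \<le> j"
        have "\<beta> j \<le> \<alpha>' j" using that unfolding LE'_def by simp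
        then show "\<beta> j = 0" using a'N j by simp
      qed
      have bk: "\<forall>j>n. (\<beta>(n:=k)) j = 0" using bn by simp
      have "schurF \<mu> (\<beta>(n:=k)) = (\<Sum>g\<in>{g. HS g \<mu> \<and> sz g + (\<beta>(n:=k)) n = sz \<mu>}. schurF g ((\<beta>(n:=k))(n:=0)))"
        by (rule branch[OF dec K bk])
      then have "schurF \<mu> (\<beta>(n:=k)) =
          (\<Sum>g\<in>{g. HS g \<mu> \<and> sz g + k = sz \<mu>}. schurF g (\<beta>(n:=0)))" by simp
      moreover have "\<beta>(n:=0) = \<beta>" using bn by (simp add: fun_upd_idem)
      ultimately show ?thesis unfolding R_def by simp
    qed
    have hb: "complete_h a (\<lambda>i. \<alpha> i - (\<beta>(n:=k)) i) =
        (if m - k \<le> a then complete_h (a - (m - k)) (\<lambda>i. \<alpha>' i - \<beta> i) else 0)" if "\<beta> \<in> LE'" for \<beta> k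
    proof -
      have "\<beta> n \<le> \<alpha>' n" using that unfolding LE'_def by simp
      then have bn: "\<beta> n = 0" using a'N by simp
      have g1: "\<forall>j>n. (\<lambda>i. \<alpha> i - (\<beta>(n:=k)) i) j = 0" using aN' by simp
      have g2: "(\<lambda>i. \<alpha> i - (\<beta>(n:=k)) i)(n:=0) = (\<lambda>i. \<alpha>' i - \<beta> i)"
        using bn by (auto simp: \<alpha>'_def)
      show ?thesis using h_branch[OF g1, of a] unfolding g2 by (simp add: m_def)
    qed
    have step2: "\<And>k. k \<le> m \<Longrightarrow> (\<Sum>\<beta>\<in>LE'. schurF \<mu> (\<beta>(n:=k)) * complete_h a (\<lambda>i. \<alpha> i - (\<beta>(n:=k)) i))
        = (if m - k \<le> a then (\<Sum>\<rho>\<in>R k. sf_mult (schurF \<rho>) (complete_h (a - (m - k))) \<alpha>') else 0)"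
    proof -
      fix k
      have "(\<Sum>\<beta>\<in>LE'. schurF \<mu> (\<beta>(n:=k)) * complete_h a (\<lambda>i. \<alpha> i - (\<beta>(n:=k)) i))
          = (\<Sum>\<beta>\<in>LE'. (\<Sum>\<rho>\<in>R k. schurF \<rho> \<beta>) * (if m - k \<le> a then complete_h (a - (m - k)) (\<lambda>i. \<alpha>' i - \<beta> i) else 0))"
        using br hb by (intro sum.cong) auto
      also have "\<dots> = (if m - k \<le> a then (\<Sum>\<beta>\<in>LE'. \<Sum>\<rho>\<in>R k. schurF \<rho> \<beta> * complete_h (a - (m - k)) (\<lambda>i. \<alpha>' i - \<beta> i)) else 0)"
        by (simp add: sum_distrib_right)
      also have "\<dots> = (if m - k \<le> a then (\<Sum>\<rho>\<in>R k. sf_mult (schurF \<rho>) (complete_h (a - (m - k))) \<alpha>') else 0)"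
        unfolding sf_mult_def LE'_def by (simp add: sum.swap[of _ _ "R k"])
      finally show "(\<Sum>\<beta>\<in>LE'. schurF \<mu> (\<beta>(n:=k)) * complete_h a (\<lambda>i. \<alpha> i - (\<beta>(n:=k)) i))
        = (if m - k \<le> a then (\<Sum>\<rho>\<in>R k. sf_mult (schurF \<rho>) (complete_h (a - (m - k))) \<alpha>') else 0)" .
    qed
    have step3: "sf_mult (schurF \<rho>) (complete_h b) \<alpha>' = (\<Sum>\<nu>\<in>PS \<rho> b. schurF \<nu> \<alpha>')" if "\<rho> \<in> R k" for \<rho> k b
    proof -
      have h: "HS \<rho> \<mu>" using that by (simp add: R_def)
      show ?thesis using Suc.IH HS_dec[OF h] HS_K[OF h K] a'N by blast
    qed
    have "sf_mult (schurF \<mu>) (complete_h a) \<alpha> =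
        (\<Sum>k\<le>m. if m - k \<le> a then (\<Sum>\<rho>\<in>R k. \<Sum>\<nu>\<in>PS \<rho> (a - (m - k)). schurF \<nu> \<alpha>') else 0)"
      unfolding step1 using step2 step3 by (intro sum.cong) auto
    also have "\<dots> = (\<Sum>k\<in>{k. k \<le> m \<and> m - k \<le> a}. \<Sum>\<rho>\<in>R k. \<Sum>\<nu>\<in>PS \<rho> (a - (m - k)). schurF \<nu> \<alpha>')"
    proof -
      have eqK: "{k. k \<le> m \<and> m - k \<le> a} = {k \<in> {..m}. m - k \<le> a}" by auto
      show ?thesis unfolding eqK sum.inter_filter[OF finite_atMost] ..
    qed
    also have "\<dots> = (\<Sum>l\<in>PS \<mu> a. \<Sum>\<nu>\<in>{\<nu>. HS \<nu> l \<and> sz \<nu> + m = sz l}. schurF \<nu> \<alpha>')"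
      unfolding R_def PS_def by (rule comb_sum[OF K])
    also have "\<dots> = (\<Sum>l\<in>PS \<mu> a. schurF l \<alpha>)"
    proof (rule sum.cong[OF refl])
      fix l assume "l \<in> PS \<mu> a"
      then have h: "HS \<mu> l" by (simp add: PS_def)
      have "schurF l \<alpha> = (\<Sum>g\<in>{g. HS g l \<and> sz g + \<alpha> n = sz l}. schurF g (\<alpha>(n:=0)))"
        using branch[OF _ HS_K_above[OF h K] aN'] HS_dec2[OF h] by blast
      then show "(\<Sum>\<nu>\<in>{\<nu>. HS \<nu> l \<and> sz \<nu> + m = sz l}. schurF \<nu> \<alpha>') = schurF l \<alpha>"
        unfolding m_def \<alpha>'_def by simp
    qed
    finally show "sf_mult (schurF \<mu>) (complete_h a) \<alpha> = (\<Sum>l\<in>PS \<mu> a. schurF l \<alpha>)" .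
  qed
qed

lemma schurF_infsupp:
  assumes "infinite {i. \<alpha> i \<noteq> 0}" "\<forall>i\<ge>K. f i = 0"
  shows "schurF f \<alpha> = 0"
proof -
  have "Tab f \<alpha> = {}"
  proof (rule ccontr)
    assume "Tab f \<alpha> \<noteq> {}"
    then obtain T where T: "ssytF f T" "contF f T = \<alpha>" by (auto simp: Tab_def)
    have "{i. \<alpha> i \<noteq> 0} \<subseteq> T ` cellsF f"
    proof
      fix k assume "k \<in> {i. \<alpha> i \<noteq> 0}"
      then have "card {c \<in> cellsF f. T c = k} \<noteq> 0" using T(2) unfolding contF_def by auto
      then have "{c \<in> cellsF f. T c = k} \<noteq> {}" by (metis card.empty)
      then obtain c where "c \<in> cellsF f" "T c = k" by blast
      then show "k \<in> T ` cellsF f" by auto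
    qed
    then show False using assms(1) finite_cellsF[OF assms(2)] by (meson finite_imageI finite_subset)
  qed
  then show ?thesis by (simp add: schurF_def)
qed

lemma sf_mult_infsupp:
  assumes "infinite {i. \<alpha> i \<noteq> 0}"
  shows "sf_mult F H \<alpha> = 0"
proof -
  let ?LE = "{\<beta>::nat\<Rightarrow>nat. \<forall>i. \<beta> i \<le> \<alpha> i}"
  let ?e = "\<lambda>i. (\<lambda>j. if j = i then 1 else 0) :: nat \<Rightarrow> nat"
  have "inj_on ?e {i. \<alpha> i \<noteq> 0}"
  proof (rule inj_onI)
    fix x y assume "?e x = ?e y"
    then have "?e x x = ?e y x" by (rule fun_cong)
    then show "x = y" by (simp split: if_splits)
  qed
  moreover have "?e ` {i. \<alpha> i \<noteq> 0} \<subseteq> ?LE" by auto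
  ultimately have "infinite ?LE" using assms by (meson finite_imageD finite_subset)
  then show ?thesis unfolding sf_mult_def by simp
qed

theorem pieri_fun:
  assumes dec: "\<forall>i. \<mu> (Suc i) \<le> \<mu> i" and K: "\<forall>i\<ge>K. \<mu> i = 0"
  shows "sf_mult (schurF \<mu>) (complete_h a) = (\<lambda>\<alpha>. \<Sum>l\<in>PS \<mu> a. schurF l \<alpha>)"
proof
  fix \<alpha> :: "nat \<Rightarrow> nat"
  show "sf_mult (schurF \<mu>) (complete_h a) \<alpha> = (\<Sum>l\<in>PS \<mu> a. schurF l \<alpha>)"
  proof (cases "finite {i. \<alpha> i \<noteq> 0}")
    case True
    then obtain n where n: "\<forall>i\<in>{i. \<alpha> i \<noteq> 0}. i < n" by (auto simp: finite_nat_set_iff_bounded)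
    have "\<forall>k\<ge>n. \<alpha> k = 0"
    proof (intro allI impI)
      fix k assume "n \<le> k"
      then show "\<alpha> k = 0" using n by (meson leD mem_Collect_eq)
    qed
    then show ?thesis using pieri_fin dec K by blast
  next
    case False
    have "(\<Sum>l\<in>PS \<mu> a. schurF l \<alpha>) = 0"
    proof (rule sum.neutral, rule ballI)
      fix l assume "l \<in> PS \<mu> a"
      then have "\<forall>i\<ge>Suc K. l i = 0" using HS_K_above[OF _ K] by (auto simp: PS_def)
      then show "schurF l \<alpha> = 0" using schurF_infsupp[OF False] by blast
    qed
    then show ?thesis using sf_mult_infsupp[OF False] by simp
  qed
qed

lemma sh_dec: "is_partition lam \<Longrightarrow> sh lam (Suc i) \<le> sh lam i"
  unfolding is_partition_def sh_def sorted_wrt_iff_nth_less by auto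

lemma sh_K: "\<forall>i\<ge>length lam. sh lam i = 0"
  by (simp add: sh_def)

lemma sz_sh: "sz (sh lam) = sum_list lam"
proof -
  have "sz (sh lam) = (\<Sum>i<length lam. sh lam i)" using sz_eq[OF sh_K] .
  also have "\<dots> = (\<Sum>i<length lam. lam ! i)" by (rule sum.cong) (auto simp: sh_def)
  also have "\<dots> = sum_list lam" by (simp add: sum_list_sum_nth atLeast0LessThan)
  finally show ?thesis .
qed

lemma sh_inj:
  assumes "is_partition l1" "is_partition l2" "sh l1 = sh l2"
  shows "l1 = l2"
proof -
  have nz: "is_partition l \<Longrightarrow> i < length l \<Longrightarrow> sh l i \<noteq> 0" for l i
    unfolding is_partition_def sh_def by (metis nth_mem)
  have "length l1 = length l2"
  proof (rule ccontr)
    assume "length l1 \<noteq> length l2"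
    then have "length l1 < length l2 \<or> length l2 < length l1" by linarith
    then show False
    proof
      assume h: "length l1 < length l2"
      then have "sh l2 (length l1) \<noteq> 0" using nz[OF assms(2)] by blast
      moreover have "sh l1 (length l1) = 0" by (simp add: sh_def)
      ultimately show False using assms(3) by metis
    next
      assume h: "length l2 < length l1"
      then have "sh l1 (length l2) \<noteq> 0" using nz[OF assms(1)] by blast
      moreover have "sh l2 (length l2) = 0" by (simp add: sh_def)
      ultimately show False using assms(3) by metis
    qed
  qed
  moreover have "\<forall>i<length l1. l1 ! i = l2 ! i"
    using assms(3) calculation unfolding sh_def by (metis)
  ultimately show ?thesis by (simp add: nth_equalityI)
qed

definition tolist :: "(nat \<Rightarrow> nat) \<Rightarrow> nat list" where
  "tolist f = map f [0..<card {i. f i \<noteq> 0}]"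

lemma tolist_props:
  assumes dec: "\<forall>i. f (Suc i) \<le> f i" and K: "\<forall>i\<ge>K. f i = 0"
  shows "sh (tolist f) = f" "is_partition (tolist f)"
proof -
  define L where "L = card {i. f i \<noteq> 0}"
  have fin: "finite {i. f i \<noteq> 0}"
    by (rule finite_subset[of _ "{..<K}"]) (use K in \<open>auto intro: ccontr simp: not_less\<close>)
  have S: "{i. f i \<noteq> 0} = {..<L}" unfolding L_def
  proof (rule downclosed_lessThan[OF fin])
    fix j j' assume "j \<in> {i. f i \<noteq> 0}" "j' < j"
    then show "j' \<in> {i. f i \<noteq> 0}" using dec_le[OF dec, of j' j] by simp
  qed
  have iff: "f i \<noteq> 0 \<longleftrightarrow> i < L" for i using S by blast
  show "sh (tolist f) = f"
  proof
    fix i show "sh (tolist f) i = f i"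
      using iff[of i] unfolding tolist_def L_def[symmetric] sh_def by auto
  qed
  have "0 \<notin> set (tolist f)"
  proof
    assume "0 \<in> set (tolist f)"
    then obtain i where "i < L" "f i = 0" by (auto simp: tolist_def L_def)
    then show False using iff by blast
  qed
  moreover have "sorted_wrt (\<ge>) (tolist f)"
    unfolding tolist_def L_def[symmetric] sorted_wrt_iff_nth_less using dec_le[OF dec] by auto
  ultimately show "is_partition (tolist f)" by (simp add: is_partition_def)
qed

definition PL :: "nat list \<Rightarrow> nat \<Rightarrow> nat list set" where
  "PL mu a = {lam. is_partition lam \<and> sh lam \<in> PS (sh mu) a}"

lemma pieri_list:
  assumes "is_partition mu"
  shows "sf_mult (schur mu) (complete_h a) = (\<lambda>\<alpha>. \<Sum>lam\<in>PL mu a. schur lam \<alpha>)"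
proof -
  have dec: "\<forall>i. sh mu (Suc i) \<le> sh mu i" using sh_dec[OF assms] by blast
  have bij: "bij_betw sh (PL mu a) (PS (sh mu) a)"
  proof (rule bij_betw_imageI)
    show "inj_on sh (PL mu a)" using sh_inj by (auto simp: PL_def inj_on_def)
    show "sh ` PL mu a = PS (sh mu) a"
    proof
      show "sh ` PL mu a \<subseteq> PS (sh mu) a" by (auto simp: PL_def)
      show "PS (sh mu) a \<subseteq> sh ` PL mu a"
      proof
        fix l assume l: "l \<in> PS (sh mu) a"
        then have h: "HS (sh mu) l" by (simp add: PS_def)
        have lK: "\<forall>i\<ge>Suc (length mu). l i = 0" using HS_K_above[OF h sh_K] .
        have ldec: "\<forall>i. l (Suc i) \<le> l i" using HS_dec2[OF h] by blast
        have "tolist l \<in> PL mu a" using tolist_props[OF ldec lK] l by (simp add: PL_def)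
        then show "l \<in> sh ` PL mu a" using tolist_props(1)[OF ldec lK] by (metis image_eqI)
      qed
    qed
  qed
  show ?thesis
    unfolding schur_sh pieri_fun[OF dec sh_K]
  proof
    fix \<alpha>
    show "(\<Sum>l\<in>PS (sh mu) a. schurF l \<alpha>) = (\<Sum>lam\<in>PL mu a. schurF (sh lam) \<alpha>)"
      using sum.reindex_bij_betw[OF bij, of "\<lambda>l. schurF l \<alpha>"] by simp
  qed
qed

lemma row_ge:
  assumes "ssytF f T" "\<forall>i. f (Suc i) \<le> f i" "(i, j) \<in> cellsF f"
  shows "i \<le> T (i, j)"
  using assms(3)
proof (induction i)
  case 0 then show ?case by simp
next
  case (Suc i)
  have c: "(i, j) \<in> cellsF f" using Suc.prems assms(2) by (auto simp: cellsF_def intro: less_le_trans)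
  have "T (i, j) < T (Suc i, j)" using assms(1) Suc.prems unfolding ssytF_def by simp
  then show ?case using Suc.IH[OF c] by simp
qed

lemma dominance:
  assumes dec: "\<forall>i. f (Suc i) \<le> f i" and K: "\<forall>i\<ge>K. f i = 0" and T: "T \<in> Tab f \<alpha>"
  shows "(\<Sum>t\<le>k. \<alpha> t) \<le> (\<Sum>i\<le>k. f i)"
proof -
  have sT: "ssytF f T" and cT: "contF f T = \<alpha>" using T by (auto simp: Tab_def)
  have fin: "finite (cellsF f)" using finite_cellsF[OF K] .
  have "(\<Sum>t\<le>k. \<alpha> t) = (\<Sum>t\<le>k. card {c \<in> cellsF f. T c = t})"
    using cT unfolding contF_def by auto
  also have "\<dots> = card (\<Union>t\<le>k. {c \<in> cellsF f. T c = t})"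
    by (rule card_UN_disjoint[symmetric]) (use fin in auto)
  also have "(\<Union>t\<le>k. {c \<in> cellsF f. T c = t}) = {c \<in> cellsF f. T c \<le> k}" by auto
  also have "card {c \<in> cellsF f. T c \<le> k} \<le> card {c \<in> cellsF f. fst c \<le> k}"
  proof (rule card_mono)
    show "finite {c \<in> cellsF f. fst c \<le> k}" using fin by simp
    show "{c \<in> cellsF f. T c \<le> k} \<subseteq> {c \<in> cellsF f. fst c \<le> k}"
    proof
      fix c assume "c \<in> {c \<in> cellsF f. T c \<le> k}"
      moreover obtain i j where "c = (i, j)" by (cases c)
      ultimately show "c \<in> {c \<in> cellsF f. fst c \<le> k}" using row_ge[OF sT dec, of i j] by auto
    qed
  qed
  also have "{c \<in> cellsF f. fst c \<le> k} = Sigma {..k} (\<lambda>i. {..<f i})" by (auto simp: cellsF_def)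
  also have "card (Sigma {..k} (\<lambda>i. {..<f i})) = (\<Sum>i\<le>k. f i)" by simp
  finally show ?thesis .
qed

lemma canonical:
  assumes dec: "\<forall>i. f (Suc i) \<le> f i" and K: "\<forall>i\<ge>K. f i = 0"
  shows "schurF f f \<noteq> 0"
proof -
  define T0 where "T0 = (\<lambda>(i, j). if j < f i then i else 0)"
  have c: "\<And>i j. (i, j) \<in> cellsF f \<longleftrightarrow> j < f i" by (simp add: cellsF_def)
  have s1: "\<forall>c. c \<notin> cellsF f \<longrightarrow> T0 c = 0" by (auto simp: T0_def cellsF_def)
  have s2: "\<forall>i j. (i, j + 1) \<in> cellsF f \<longrightarrow> T0 (i, j) \<le> T0 (i, j + 1)" by (auto simp: T0_def cellsF_def)
  have s3: "\<forall>i j. (i + 1, j) \<in> cellsF f \<longrightarrow> T0 (i, j) < T0 (i + 1, j)"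
  proof (intro allI impI)
    fix i j assume "(i + 1, j) \<in> cellsF f"
    then have "j < f (Suc i)" "j < f i" using dec by (auto simp: cellsF_def intro: less_le_trans)
    then show "T0 (i, j) < T0 (i + 1, j)" by (simp add: T0_def)
  qed
  have "contF f T0 t = f t" for t
  proof -
    have "{c \<in> cellsF f. T0 c = t} = {t} \<times> {..<f t}" by (auto simp: T0_def cellsF_def)
    then show ?thesis by (simp add: contF_def)
  qed
  then have "T0 \<in> Tab f f" using s1 s2 s3 by (auto simp: Tab_def ssytF_def)
  moreover have "finite (Tab f f)" using Tab_finite[OF K K] .
  ultimately have "card (Tab f f) \<noteq> 0" by (metis card_0_eq empty_iff)
  then show ?thesis by (simp add: schurF_def)
qed

definition PP :: "(nat \<Rightarrow> nat) \<Rightarrow> nat \<Rightarrow> nat" where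
  "PP f k = (\<Sum>i\<le>k. f i)"

definition wt :: "nat \<Rightarrow> (nat \<Rightarrow> nat) \<Rightarrow> nat" where
  "wt W f = (\<Sum>k<W. PP f k)"

lemma wt_le: "\<forall>k. PP g k \<le> PP f k \<Longrightarrow> wt W g \<le> wt W f"
  unfolding wt_def by (simp add: sum_mono)

lemma wt_eq:
  assumes "\<forall>k. PP g k \<le> PP f k" "wt W f \<le> wt W g" "\<forall>i\<ge>W. f i = 0" "\<forall>i\<ge>W. g i = 0"
  shows "g = f"
proof -
  have eqs: "wt W g = wt W f" using assms(2) wt_le[OF assms(1), of W] by simp
  have P: "PP g k = PP f k" if "k < W" for k
    using sum_mono_inv[of "\<lambda>k. PP g k" "{..<W}" "\<lambda>k. PP f k" k] eqs assms(1) that unfolding wt_def by auto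
  show ?thesis
  proof
    fix i show "g i = f i"
    proof (cases "i < W")
      case True
      show ?thesis
      proof (cases i)
        case 0 then show ?thesis using P[OF True] by (simp add: PP_def)
      next
        case (Suc j)
        have "PP g (Suc j) = PP g j + g (Suc j)" "PP f (Suc j) = PP f j + f (Suc j)" by (simp_all add: PP_def)
        moreover have "PP g j = PP f j" using P True Suc by simp
        ultimately show ?thesis using P[OF True] Suc by simp
      qed
    next
      case False then show ?thesis using assms(3,4) by simp
    qed
  qed
qed

lemma schur_dom:
  assumes "is_partition mu" "schur mu \<alpha> \<noteq> 0"
  shows "\<forall>k. PP \<alpha> k \<le> PP (sh mu) k"
proof
  fix k
  have "Tab (sh mu) \<alpha> \<noteq> {}" using assms(2) by (auto simp: schur_sh schurF_def)
  then obtain T where "T \<in> Tab (sh mu) \<alpha>" by blast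
  then show "PP \<alpha> k \<le> PP (sh mu) k"
    unfolding PP_def using dominance[OF _ sh_K] sh_dec[OF assms(1)] by blast
qed

lemma schur_self: "is_partition mu \<Longrightarrow> schur mu (sh mu) \<noteq> 0"
  unfolding schur_sh using canonical[OF _ sh_K] sh_dec by blast

lemma lin_indep2:
  fixes c :: "nat list \<times> nat list \<Rightarrow> int"
  assumes fin: "finite S" and part: "\<forall>x\<in>S. is_partition (fst x) \<and> is_partition (snd x)"
    and eq: "\<forall>\<alpha> \<beta>. (\<Sum>x\<in>S. c x * (schur (fst x) \<alpha> * schur (snd x) \<beta>)) = 0"
  shows "\<forall>x\<in>S. c x = 0"
proof (rule ccontr)
  assume "\<not> (\<forall>x\<in>S. c x = 0)"
  define S' where "S' = {x \<in> S. c x \<noteq> 0}"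
  have S'ne: "S' \<noteq> {}" and finS': "finite S'" using \<open>\<not> _\<close> fin by (auto simp: S'_def)
  define W where "W = (\<Sum>x\<in>S. length (fst x) + length (snd x))"
  have WK: "length (fst x) \<le> W \<and> length (snd x) \<le> W" if "x \<in> S" for x
  proof -
    have "length (fst x) + length (snd x) \<le> W" unfolding W_def by (rule member_le_sum) (use that fin in auto)
    then show ?thesis by simp
  qed
  have shW: "\<forall>i\<ge>W. sh l i = 0" if "length l \<le> W" for l using that by (simp add: sh_def)
  define wx where "wx x = wt W (sh (fst x)) + wt W (sh (snd x))" for x
  define M where "M = Max (wx ` S')"
  have "M \<in> wx ` S'" unfolding M_def using S'ne finS' by simp
  then obtain x0 where x0: "x0 \<in> S'" "wx x0 = M" by blast
  have maxi: "wx x \<le> wx x0" if "x \<in> S'" for x using that finS' x0(2) unfolding M_def by simp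
  obtain l0 k0 where lk: "x0 = (l0, k0)" by (cases x0)
  have x0S: "x0 \<in> S" and cx0: "c x0 \<noteq> 0" using x0 by (auto simp: S'_def)
  have pl0: "is_partition l0" "is_partition k0" using part x0S lk by auto
  have zero: "c x * (schur (fst x) (sh l0) * schur (snd x) (sh k0)) = 0" if "x \<in> S - {x0}" for x
  proof (rule ccontr)
    assume nz: "c x * (schur (fst x) (sh l0) * schur (snd x) (sh k0)) \<noteq> 0"
    then have cx: "c x \<noteq> 0" and s1: "schur (fst x) (sh l0) \<noteq> 0" and s2: "schur (snd x) (sh k0) \<noteq> 0" by auto
    have xS: "x \<in> S" "x \<noteq> x0" using that by auto
    have px: "is_partition (fst x)" "is_partition (snd x)" using part xS by auto
    have d1: "\<forall>k. PP (sh l0) k \<le> PP (sh (fst x)) k" using schur_dom[OF px(1) s1] .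
    have d2: "\<forall>k. PP (sh k0) k \<le> PP (sh (snd x)) k" using schur_dom[OF px(2) s2] .
    have w1: "wt W (sh l0) \<le> wt W (sh (fst x))" using wt_le[OF d1] .
    have w2: "wt W (sh k0) \<le> wt W (sh (snd x))" using wt_le[OF d2] .
    have "wx x \<le> wx x0" using maxi cx xS by (auto simp: S'_def)
    then have w3: "wt W (sh (fst x)) + wt W (sh (snd x)) \<le> wt W (sh l0) + wt W (sh k0)"
      unfolding wx_def lk by simp
    have e1: "sh l0 = sh (fst x)"
      using wt_eq[OF d1 _ shW shW] w1 w2 w3 WK[OF xS(1)] WK[OF x0S] lk by simp
    have e2: "sh k0 = sh (snd x)"
      using wt_eq[OF d2 _ shW shW] w1 w2 w3 WK[OF xS(1)] WK[OF x0S] lk by simp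
    have "fst x = l0" using sh_inj[OF px(1) pl0(1)] e1 by simp
    moreover have "snd x = k0" using sh_inj[OF px(2) pl0(2)] e2 by simp
    ultimately have "x = x0" using lk by (cases x) simp
    then show False using xS by simp
  qed
  have "(\<Sum>x\<in>S. c x * (schur (fst x) (sh l0) * schur (snd x) (sh k0)))
      = c x0 * (schur (fst x0) (sh l0) * schur (snd x0) (sh k0)) + (\<Sum>x\<in>S - {x0}. c x * (schur (fst x) (sh l0) * schur (snd x) (sh k0)))"
    using sum.remove[OF fin x0S] by blast
  also have "(\<Sum>x\<in>S - {x0}. c x * (schur (fst x) (sh l0) * schur (snd x) (sh k0))) = 0"
    using zero by (rule sum.neutral[OF ballI])
  finally have "c x0 * (schur l0 (sh l0) * schur k0 (sh k0)) = 0" using eq lk by simp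
  then show False using cx0 schur_self[OF pl0(1)] schur_self[OF pl0(2)] by simp
qed

lemma schur_nil: "schur [] \<beta> = (if \<beta> = (\<lambda>_. 0) then 1 else 0)"
proof -
  have "sh [] = (\<lambda>_. 0)" by (auto simp: sh_def)
  then have "schur [] = schurF (\<lambda>_. 0)" by (simp add: schur_sh)
  moreover have "schurF (\<lambda>_. 0) \<beta> = (if \<beta> = (\<lambda>_. 0) then 1 else 0)"
  proof (cases "\<beta> = (\<lambda>_. 0)")
    case True then show ?thesis using schurF_zero[of 0 "\<lambda>_. 0"] by simp
  next
    case False
    have "Tab (\<lambda>_. 0) \<beta> = {}"
    proof (rule ccontr)
      assume "Tab (\<lambda>_. 0) \<beta> \<noteq> {}"
      then obtain T where "contF (\<lambda>_. 0) T = \<beta>" by (auto simp: Tab_def)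
      moreover have "contF (\<lambda>_. 0) T = (\<lambda>_. 0)" by (auto simp: contF_def cellsF_def)
      ultimately show False using False by simp
    qed
    then show ?thesis using False by (simp add: schurF_def)
  qed
  ultimately show ?thesis by simp
qed

lemma lin_indep1:
  fixes c :: "nat list \<Rightarrow> int"
  assumes fin: "finite S" and part: "\<forall>x\<in>S. is_partition x"
    and eq: "\<forall>\<alpha>. (\<Sum>x\<in>S. c x * schur x \<alpha>) = 0"
  shows "\<forall>x\<in>S. c x = 0"
proof -
  have inj: "inj_on (\<lambda>x. (x, [] :: nat list)) S" by (auto simp: inj_on_def)
  have img: "(\<lambda>x. (x, [] :: nat list)) ` S = S \<times> {[] :: nat list}" by auto
  have "\<forall>x\<in>S \<times> {[] :: nat list}. (\<lambda>p. c (fst p)) x = 0"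
  proof (rule lin_indep2[where c = "\<lambda>p. c (fst p)"])
    show "finite (S \<times> {[] :: nat list})" using fin by simp
    show "\<forall>x\<in>S \<times> {[] :: nat list}. is_partition (fst x) \<and> is_partition (snd x)"
      using part by (auto simp: is_partition_def)
    show "\<forall>\<alpha> \<beta>. (\<Sum>x\<in>S \<times> {[] :: nat list}. c (fst x) * (schur (fst x) \<alpha> * schur (snd x) \<beta>)) = 0"
    proof (intro allI)
      fix \<alpha> \<beta>
      have "(\<Sum>x\<in>S \<times> {[] :: nat list}. c (fst x) * (schur (fst x) \<alpha> * schur (snd x) \<beta>))
          = (\<Sum>x\<in>S. c x * (schur x \<alpha> * schur [] \<beta>))"
        unfolding img[symmetric] sum.reindex[OF inj] by simp
      also have "\<dots> = (\<Sum>x\<in>S. c x * schur x \<alpha>) * schur [] \<beta>"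
        by (simp add: sum_distrib_right mult.assoc)
      finally show "(\<Sum>x\<in>S \<times> {[] :: nat list}. c (fst x) * (schur (fst x) \<alpha> * schur (snd x) \<beta>)) = 0"
        using eq by simp
    qed
  qed
  then show ?thesis by auto
qed

lemma schur_coeff_eq:
  assumes fin: "finite {\<mu>. c \<mu> \<noteq> 0}" and part: "\<forall>\<mu>. c \<mu> \<noteq> 0 \<longrightarrow> is_partition \<mu>"
    and G: "G = (\<lambda>\<alpha>. \<Sum>\<mu>\<in>{\<mu>. c \<mu> \<noteq> 0}. c \<mu> * schur \<mu> \<alpha>)"
  shows "schur_coeff G = c"
  unfolding schur_coeff_def
proof (rule the_equality)
  show "finite {\<mu>. c \<mu> \<noteq> 0} \<and> (\<forall>\<mu>. c \<mu> \<noteq> 0 \<longrightarrow> is_partition \<mu>) \<and> G = (\<lambda>\<alpha>. \<Sum>\<mu>\<in>{\<mu>. c \<mu> \<noteq> 0}. c \<mu> * schur \<mu> \<alpha>)"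
    using assms by simp
  fix c' assume h: "finite {\<mu>. c' \<mu> \<noteq> 0} \<and> (\<forall>\<mu>. c' \<mu> \<noteq> 0 \<longrightarrow> is_partition \<mu>) \<and> G = (\<lambda>\<alpha>. \<Sum>\<mu>\<in>{\<mu>. c' \<mu> \<noteq> 0}. c' \<mu> * schur \<mu> \<alpha>)"
  define S where "S = {\<mu>. c \<mu> \<noteq> 0} \<union> {\<mu>. c' \<mu> \<noteq> 0}"
  have finS: "finite S" using fin h by (simp add: S_def)
  have partS: "\<forall>x\<in>S. is_partition x" using part h by (auto simp: S_def)
  have "\<forall>\<alpha>. (\<Sum>\<mu>\<in>S. (c' \<mu> - c \<mu>) * schur \<mu> \<alpha>) = 0"
  proof
    fix \<alpha>
    have e1: "(\<Sum>\<mu>\<in>S. c \<mu> * schur \<mu> \<alpha>) = (\<Sum>\<mu>\<in>{\<mu>. c \<mu> \<noteq> 0}. c \<mu> * schur \<mu> \<alpha>)"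
      by (rule sum.mono_neutral_right[OF finS]) (auto simp: S_def)
    have e2: "(\<Sum>\<mu>\<in>S. c' \<mu> * schur \<mu> \<alpha>) = (\<Sum>\<mu>\<in>{\<mu>. c' \<mu> \<noteq> 0}. c' \<mu> * schur \<mu> \<alpha>)"
      by (rule sum.mono_neutral_right[OF finS]) (auto simp: S_def)
    have e3: "(\<Sum>\<mu>\<in>{\<mu>. c' \<mu> \<noteq> 0}. c' \<mu> * schur \<mu> \<alpha>) = (\<Sum>\<mu>\<in>{\<mu>. c \<mu> \<noteq> 0}. c \<mu> * schur \<mu> \<alpha>)"
      using fun_cong[OF G, of \<alpha>] h by simp
    show "(\<Sum>\<mu>\<in>S. (c' \<mu> - c \<mu>) * schur \<mu> \<alpha>) = 0"
      using e1 e2 e3 by (simp add: left_diff_distrib sum_subtractf)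
  qed
  then have z: "\<forall>x\<in>S. c' x - c x = 0" using lin_indep1[where c = "\<lambda>x. c' x - c x", OF finS partS] by simp
  show "c' = c"
  proof
    fix x show "c' x = c x"
    proof (cases "x \<in> S")
      case True then have "c' x - c x = 0" using z by blast
      then show ?thesis by simp
    next
      case False then have "c x = 0" "c' x = 0" unfolding S_def by auto
      then show ?thesis by simp
    qed
  qed
qed

lemma schur_coeff2_eq:
  assumes fin: "finite {m. c m \<noteq> 0}" and part: "\<forall>\<mu> \<nu>. c (\<mu>, \<nu>) \<noteq> 0 \<longrightarrow> is_partition \<mu> \<and> is_partition \<nu>"
    and G: "G = (\<lambda>\<alpha> \<beta>. \<Sum>(\<mu>, \<nu>)\<in>{m. c m \<noteq> 0}. c (\<mu>, \<nu>) * (schur \<mu> \<alpha> * schur \<nu> \<beta>))"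
  shows "schur_coeff2 G = c"
  unfolding schur_coeff2_def
proof (rule the_equality)
  show "finite {m. c m \<noteq> 0} \<and> (\<forall>\<mu> \<nu>. c (\<mu>, \<nu>) \<noteq> 0 \<longrightarrow> is_partition \<mu> \<and> is_partition \<nu>) \<and>
      G = (\<lambda>\<alpha> \<beta>. \<Sum>(\<mu>, \<nu>)\<in>{m. c m \<noteq> 0}. c (\<mu>, \<nu>) * (schur \<mu> \<alpha> * schur \<nu> \<beta>))"
    using assms by simp
  fix c' assume h: "finite {m. c' m \<noteq> 0} \<and> (\<forall>\<mu> \<nu>. c' (\<mu>, \<nu>) \<noteq> 0 \<longrightarrow> is_partition \<mu> \<and> is_partition \<nu>) \<and>
      G = (\<lambda>\<alpha> \<beta>. \<Sum>(\<mu>, \<nu>)\<in>{m. c' m \<noteq> 0}. c' (\<mu>, \<nu>) * (schur \<mu> \<alpha> * schur \<nu> \<beta>))"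
  define S where "S = {m. c m \<noteq> 0} \<union> {m. c' m \<noteq> 0}"
  have finS: "finite S" using fin h by (simp add: S_def)
  have partS: "\<forall>x\<in>S. is_partition (fst x) \<and> is_partition (snd x)"
  proof
    fix x assume "x \<in> S"
    moreover obtain u v where "x = (u, v)" by (cases x)
    ultimately show "is_partition (fst x) \<and> is_partition (snd x)" using part h by (auto simp: S_def)
  qed
  have "\<forall>\<alpha> \<beta>. (\<Sum>x\<in>S. (c' x - c x) * (schur (fst x) \<alpha> * schur (snd x) \<beta>)) = 0"
  proof (intro allI)
    fix \<alpha> \<beta>
    have e1: "(\<Sum>x\<in>S. c x * (schur (fst x) \<alpha> * schur (snd x) \<beta>)) = (\<Sum>x\<in>{m. c m \<noteq> 0}. c x * (schur (fst x) \<alpha> * schur (snd x) \<beta>))"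
      by (rule sum.mono_neutral_right[OF finS]) (auto simp: S_def)
    have e2: "(\<Sum>x\<in>S. c' x * (schur (fst x) \<alpha> * schur (snd x) \<beta>)) = (\<Sum>x\<in>{m. c' m \<noteq> 0}. c' x * (schur (fst x) \<alpha> * schur (snd x) \<beta>))"
      by (rule sum.mono_neutral_right[OF finS]) (auto simp: S_def)
    have e3: "(\<Sum>x\<in>{m. c' m \<noteq> 0}. c' x * (schur (fst x) \<alpha> * schur (snd x) \<beta>)) = (\<Sum>x\<in>{m. c m \<noteq> 0}. c x * (schur (fst x) \<alpha> * schur (snd x) \<beta>))"
    proof -
      have "G \<alpha> \<beta> = (\<Sum>x\<in>{m. c m \<noteq> 0}. c x * (schur (fst x) \<alpha> * schur (snd x) \<beta>))"
        unfolding G by (simp add: split_def)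
      moreover have "G \<alpha> \<beta> = (\<Sum>x\<in>{m. c' m \<noteq> 0}. c' x * (schur (fst x) \<alpha> * schur (snd x) \<beta>))"
        using h by (simp add: split_def)
      ultimately show ?thesis by simp
    qed
    show "(\<Sum>x\<in>S. (c' x - c x) * (schur (fst x) \<alpha> * schur (snd x) \<beta>)) = 0"
      using e1 e2 e3 by (simp add: left_diff_distrib sum_subtractf)
  qed
  then have z: "\<forall>x\<in>S. c' x - c x = 0" using lin_indep2[where c = "\<lambda>x. c' x - c x", OF finS partS] by simp
  show "c' = c"
  proof
    fix x show "c' x = c x"
    proof (cases "x \<in> S")
      case True then have "c' x - c x = 0" using z by blast
      then show ?thesis by simp
    next
      case False then have "c x = 0" "c' x = 0" unfolding S_def by auto
      then show ?thesis by simp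
    qed
  qed
qed

lemma length_le_sum: "0 \<notin> set xs \<Longrightarrow> length xs \<le> sum_list (xs :: nat list)"
  by (induction xs) auto

lemma finite_partitions: "finite (partitions_of n)"
proof -
  have "partitions_of n \<subseteq> {xs. set xs \<subseteq> {..n} \<and> length xs \<le> n}"
  proof
    fix xs assume "xs \<in> partitions_of n"
    then have "is_partition xs" "sum_list xs = n" by (auto simp: partitions_of_def)
    then show "xs \<in> {xs. set xs \<subseteq> {..n} \<and> length xs \<le> n}"
      using length_le_sum[of xs] member_le_sum_list[of _ xs] by (auto simp: is_partition_def)
  qed
  then show ?thesis using finite_lists_length_le[of "{..n}" n] finite_subset by blast
qed

lemma PL_sub: "PL mu a \<subseteq> partitions_of (sum_list mu + a)"
  by (auto simp: PL_def PS_def partitions_of_def sz_sh)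

lemma finite_PL: "finite (PL mu a)"
  using PL_sub finite_partitions finite_subset by blast

lemma coeff_pieri:
  assumes "is_partition mu"
  shows "schur_coeff (sf_mult (schur mu) (complete_h a)) = (\<lambda>lam. if lam \<in> PL mu a then 1 else 0)"
proof (rule schur_coeff_eq)
  have e: "{lam. (if lam \<in> PL mu a then 1 else 0 :: int) \<noteq> 0} = PL mu a" by auto
  show "finite {lam. (if lam \<in> PL mu a then 1 else 0 :: int) \<noteq> 0}" unfolding e by (rule finite_PL)
  show "\<forall>lam. (if lam \<in> PL mu a then 1 else 0 :: int) \<noteq> 0 \<longrightarrow> is_partition lam" by (auto simp: PL_def)
  show "sf_mult (schur mu) (complete_h a) = (\<lambda>\<alpha>. \<Sum>lam\<in>{lam. (if lam \<in> PL mu a then 1 else 0 :: int) \<noteq> 0}.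
      (if lam \<in> PL mu a then 1 else 0) * schur lam \<alpha>)"
    unfolding e pieri_list[OF assms] by simp
qed

lemma trunc_pieri:
  assumes "is_partition mu"
  shows "truncate_first p (sf_mult (schur mu) (complete_h a)) = (\<lambda>\<alpha>. \<Sum>lam\<in>{lam \<in> PL mu a. part lam 1 = p}. schur lam \<alpha>)"
  unfolding truncate_first_def coeff_pieri[OF assms]
  by (rule ext, rule sum.cong) auto

definition cntF :: "nat \<Rightarrow> nat \<Rightarrow> nat \<Rightarrow> nat \<Rightarrow> nat \<Rightarrow> nat list \<times> nat list \<Rightarrow> nat" where
  "cntF d a b p p' x = card {mu \<in> partitions_of d. fst x \<in> {lam \<in> PL mu a. part lam 1 = p} \<and> snd x \<in> {lam \<in> PL mu b. part lam 1 = p'}}"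

lemma F_sum_coeff:
  assumes "l1 \<in> partitions_of (a + d)" "l2 \<in> partitions_of (b + d)"
  shows "schur_coeff2 (F_sum d a b p p') (l1, l2) = int (cntF d a b p p' (l1, l2))"
proof -
  define A where "A mu = {lam \<in> PL mu a. part lam 1 = p}" for mu
  define B where "B mu = {lam \<in> PL mu b. part lam 1 = p'}" for mu
  define Q where "Q = partitions_of (a + d) \<times> partitions_of (b + d)"
  define c2 where "c2 x = (if x \<in> Q then int (cntF d a b p p' x) else 0)" for x
  have finQ: "finite Q" unfolding Q_def using finite_partitions by simp
  have finP: "finite (partitions_of d)" using finite_partitions .
  have AB: "A mu \<times> B mu \<subseteq> Q" if "mu \<in> partitions_of d" for mu
  proof -
    have "sum_list mu = d" using that by (simp add: partitions_of_def)
    then show ?thesis using PL_sub[of mu a] PL_sub[of mu b] unfolding A_def B_def Q_def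
      by (auto simp: add.commute)
  qed
  have cnt: "cntF d a b p p' x = card {mu \<in> partitions_of d. x \<in> A mu \<times> B mu}" for x
    unfolding cntF_def A_def B_def by (cases x) simp
  have F: "F_sum d a b p p' = (\<lambda>\<alpha> \<beta>. \<Sum>(\<mu>, \<nu>)\<in>{m. c2 m \<noteq> 0}. c2 (\<mu>, \<nu>) * (schur \<mu> \<alpha> * schur \<nu> \<beta>))"
  proof (intro ext)
    fix \<alpha> \<beta>
    define g where "g x = schur (fst x) \<alpha> * schur (snd x) \<beta>" for x
    have "F_sum d a b p p' \<alpha> \<beta> = (\<Sum>mu\<in>partitions_of d. (\<Sum>lam\<in>A mu. schur lam \<alpha>) * (\<Sum>lam\<in>B mu. schur lam \<beta>))"
      unfolding F_sum_def A_def B_def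
      by (rule sum.cong[OF refl]) (simp add: trunc_pieri partitions_of_def)
    also have "\<dots> = (\<Sum>mu\<in>partitions_of d. \<Sum>x\<in>{x\<in>Q. x \<in> A mu \<times> B mu}. g x)"
    proof (rule sum.cong[OF refl])
      fix mu assume mu: "mu \<in> partitions_of d"
      have e: "{x\<in>Q. x \<in> A mu \<times> B mu} = A mu \<times> B mu" using AB[OF mu] by auto
      show "(\<Sum>lam\<in>A mu. schur lam \<alpha>) * (\<Sum>lam\<in>B mu. schur lam \<beta>) = (\<Sum>x\<in>{x\<in>Q. x \<in> A mu \<times> B mu}. g x)"
        unfolding e g_def sum_product sum.cartesian_product by (simp add: split_def)
    qed
    also have "\<dots> = (\<Sum>x\<in>Q. \<Sum>mu\<in>{mu \<in> partitions_of d. x \<in> A mu \<times> B mu}. g x)"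
      by (rule sum.swap_restrict[OF finP finQ])
    also have "\<dots> = (\<Sum>x\<in>Q. c2 x * g x)"
      by (rule sum.cong[OF refl]) (simp add: c2_def cnt)
    also have "\<dots> = (\<Sum>x\<in>{m. c2 m \<noteq> 0}. c2 x * g x)"
      by (rule sum.mono_neutral_right[OF finQ]) (auto simp: c2_def)
    also have "\<dots> = (\<Sum>(\<mu>, \<nu>)\<in>{m. c2 m \<noteq> 0}. c2 (\<mu>, \<nu>) * (schur \<mu> \<alpha> * schur \<nu> \<beta>))"
      by (simp add: g_def split_def)
    finally show "F_sum d a b p p' \<alpha> \<beta> = (\<Sum>(\<mu>, \<nu>)\<in>{m. c2 m \<noteq> 0}. c2 (\<mu>, \<nu>) * (schur \<mu> \<alpha> * schur \<nu> \<beta>))" .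
  qed
  have "schur_coeff2 (F_sum d a b p p') = c2"
  proof (rule schur_coeff2_eq[OF _ _ F])
    show "finite {m. c2 m \<noteq> 0}" by (rule finite_subset[OF _ finQ]) (auto simp: c2_def split: if_splits)
    show "\<forall>\<mu> \<nu>. c2 (\<mu>, \<nu>) \<noteq> 0 \<longrightarrow> is_partition \<mu> \<and> is_partition \<nu>"
      by (auto simp: c2_def Q_def partitions_of_def split: if_splits)
  qed
  then show ?thesis using assms by (simp add: c2_def Q_def)
qed

definition CS :: "(nat \<Rightarrow> nat) \<Rightarrow> nat \<Rightarrow> nat \<Rightarrow> (nat \<Rightarrow> nat) set" where
  "CS r N e = {j. (\<forall>i<N. j i \<le> r i) \<and> (\<forall>i\<ge>N. j i = 0) \<and> (\<Sum>i<N. j i) = e}"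

lemma finite_CS: "finite (CS r N e)"
proof -
  have "CS r N e \<subseteq> {h. (\<forall>x. x \<notin> {..<N} \<longrightarrow> h x = 0) \<and> (\<forall>x. h x \<le> e)}"
  proof
    fix j assume j: "j \<in> CS r N e"
    show "j \<in> {h. (\<forall>x. x \<notin> {..<N} \<longrightarrow> h x = 0) \<and> (\<forall>x. h x \<le> e)}"
    proof (intro CollectI conjI allI impI)
      fix x
      show "x \<notin> {..<N} \<Longrightarrow> j x = 0" using j by (simp add: CS_def)
      show "j x \<le> e"
      proof (cases "x < N")
        case True
        have "j x \<le> (\<Sum>i<N. j i)" by (rule member_le_sum) (use True in auto)
        then show ?thesis using j by (simp add: CS_def)
      next
        case False then show ?thesis using j by (simp add: CS_def)
      qed
    qed
  qed
  then show ?thesis using bounded_funs_finite[of "{..<N}" e] finite_subset by blast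
qed

lemma coeff_geom: "coeff (\<Sum>t=0..R. monom (1::int) t) s = (if s \<le> R then 1 else 0)"
  by (simp add: coeff_sum)

lemma CS_Suc:
  "card (CS r (Suc N) e) = (\<Sum>k\<le>e. card (CS r N k) * (if e - k \<le> r N then 1 else 0))"
proof -
  define I where "I = {k. k \<le> e \<and> e - k \<le> r N}"
  define E where "E k = (\<lambda>j. j(N := e - k)) ` CS r N k" for k
  have U: "CS r (Suc N) e = (\<Union>k\<in>I. E k)"
  proof
    show "CS r (Suc N) e \<subseteq> (\<Union>k\<in>I. E k)"
    proof
      fix j assume j: "j \<in> CS r (Suc N) e"
      have s: "(\<Sum>i<N. j i) + j N = e" using j by (simp add: CS_def)
      define k where "k = e - j N"
      have kI: "k \<in> I" using s j by (auto simp: I_def k_def CS_def)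
      have "j(N:=0) \<in> CS r N k"
      proof -
        have "(\<Sum>i<N. (j(N:=0)) i) = (\<Sum>i<N. j i)" by (rule sum.cong) auto
        then show ?thesis using j s by (auto simp: CS_def k_def)
      qed
      moreover have "j = (j(N:=0))(N := e - k)" using s by (auto simp: k_def)
      ultimately show "j \<in> (\<Union>k\<in>I. E k)" using kI unfolding E_def by blast
    qed
    show "(\<Union>k\<in>I. E k) \<subseteq> CS r (Suc N) e"
    proof
      fix x assume "x \<in> (\<Union>k\<in>I. E k)"
      then obtain k j where k: "k \<in> I" and j: "j \<in> CS r N k" and x: "x = j(N := e - k)"
        by (auto simp: E_def)
      have "(\<Sum>i<N. x i) = (\<Sum>i<N. j i)" unfolding x by (rule sum.cong) auto
      then have "(\<Sum>i<Suc N. x i) = e" using j k by (simp add: CS_def I_def x)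
      moreover have "\<forall>i<Suc N. x i \<le> r i" using j k by (auto simp: CS_def I_def x less_Suc_eq)
      moreover have "\<forall>i\<ge>Suc N. x i = 0" using j by (auto simp: CS_def x)
      ultimately show "x \<in> CS r (Suc N) e" by (simp add: CS_def)
    qed
  qed
  have finI: "finite I" by (rule finite_subset[of _ "{..e}"]) (auto simp: I_def)
  have disj: "\<forall>k1\<in>I. \<forall>k2\<in>I. k1 \<noteq> k2 \<longrightarrow> E k1 \<inter> E k2 = {}"
  proof (intro ballI impI)
    fix k1 k2 assume k: "k1 \<in> I" "k2 \<in> I" "k1 \<noteq> k2"
    have "e - k1 \<noteq> e - k2" using k by (auto simp: I_def)
    then show "E k1 \<inter> E k2 = {}" unfolding E_def by (auto dest: fun_cong[where x = N])
  qed
  have inj: "inj_on (\<lambda>j. j(N := e - k)) (CS r N k)" for k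
  proof (rule inj_onI)
    fix x y assume xy: "x \<in> CS r N k" "y \<in> CS r N k" "x(N := e - k) = y(N := e - k)"
    show "x = y"
    proof
      fix i show "x i = y i"
      proof (cases "i = N")
        case True then show ?thesis using xy(1,2) by (simp add: CS_def)
      next
        case False then show ?thesis using fun_cong[OF xy(3), of i] by simp
      qed
    qed
  qed
  have "card (CS r (Suc N) e) = (\<Sum>k\<in>I. card (E k))"
    unfolding U by (rule card_UN_disjoint[OF finI _ disj]) (auto simp: E_def finite_CS)
  also have "\<dots> = (\<Sum>k\<in>I. card (CS r N k))"
    by (rule sum.cong[OF refl]) (simp add: E_def card_image[OF inj])
  also have "\<dots> = (\<Sum>k\<le>e. card (CS r N k) * (if e - k \<le> r N then 1 else 0))"
  proof -
    have eqI: "I = {k \<in> {..e}. e - k \<le> r N}" by (auto simp: I_def)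
    show ?thesis unfolding eqI sum.inter_filter[OF finite_atMost] by (rule sum.cong) auto
  qed
  finally show ?thesis .
qed

lemma coeff_prod_geom:
  "coeff (\<Prod>i<N. \<Sum>t=0..r i. monom (1::int) t) e = int (card (CS r N e))"
proof (induction N arbitrary: e)
  case 0
  have "CS r 0 e = (if e = 0 then {\<lambda>_. 0} else {})" by (auto simp: CS_def)
  then show ?case by simp
next
  case (Suc N)
  have "coeff (\<Prod>i<Suc N. \<Sum>t=0..r i. monom (1::int) t) e
      = coeff ((\<Prod>i<N. \<Sum>t=0..r i. monom (1::int) t) * (\<Sum>t=0..r N. monom (1::int) t)) e"
    by simp
  also have "\<dots> = (\<Sum>k\<le>e. int (card (CS r N k)) * (if e - k \<le> r N then 1 else 0))"
    unfolding coeff_mult Suc.IH coeff_geom ..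
  also have "\<dots> = int (card (CS r (Suc N) e))"
    unfolding CS_Suc of_nat_sum by (rule sum.cong) auto
  finally show ?case .
qed

lemma part_sh: "part l (Suc i) = sh l i"
  by (auto simp: part_def sh_def)

lemma tolist_sh: "is_partition mu \<Longrightarrow> tolist (sh mu) = mu"
  using tolist_props[OF _ sh_K, of mu] sh_dec[of mu] sh_inj by blast

lemma count_mu:
  fixes l1 l2 :: "nat list"
  defines "M \<equiv> \<lambda>i. max (sh l1 (Suc i)) (sh l2 (Suc i))"
    and "m \<equiv> \<lambda>i. min (sh l1 i) (sh l2 i)"
    and "N \<equiv> length l1 + length l2"
  assumes cond: "\<forall>i. M i \<le> m i"
  shows "card {mu \<in> partitions_of d. HS (sh mu) (sh l1) \<and> HS (sh mu) (sh l2)} =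
    (if (\<Sum>i<N. M i) \<le> d then card (CS (\<lambda>i. m i - M i) N (d - (\<Sum>i<N. M i))) else 0)"
proof -
  define Mu where "Mu = {mu \<in> partitions_of d. HS (sh mu) (sh l1) \<and> HS (sh mu) (sh l2)}"
  define SM where "SM = (\<Sum>i<N. M i)"
  define r where "r = (\<lambda>i. m i - M i)"
  have mK: "\<forall>i\<ge>N. m i = 0" unfolding m_def N_def by (auto simp: sh_def)
  have MK: "\<forall>i\<ge>N. M i = 0" unfolding M_def N_def by (auto simp: sh_def)
  have HSiff: "HS g (sh l1) \<and> HS g (sh l2) \<longleftrightarrow> (\<forall>i. M i \<le> g i \<and> g i \<le> m i)" for g
    unfolding HS_def M_def m_def by auto
  have mM: "m (Suc i) \<le> M i" for i unfolding M_def m_def by auto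
  have szMu: "(\<Sum>i<N. sh mu i - M i) + SM = d" "\<forall>i\<ge>N. sh mu i = 0" if "mu \<in> Mu" for mu
  proof -
    have b: "\<forall>i. M i \<le> sh mu i \<and> sh mu i \<le> m i" using that HSiff by (auto simp: Mu_def)
    show vK: "\<forall>i\<ge>N. sh mu i = 0" using b mK by (metis le_zero_eq)
    have "d = sz (sh mu)" using that by (simp add: Mu_def partitions_of_def sz_sh)
    also have "\<dots> = (\<Sum>i<N. sh mu i)" using sz_eq[OF vK] .
    also have "\<dots> = (\<Sum>i<N. (sh mu i - M i) + M i)" by (rule sum.cong) (use b in auto)
    also have "\<dots> = (\<Sum>i<N. sh mu i - M i) + SM" by (simp add: sum.distrib SM_def)
    finally show "(\<Sum>i<N. sh mu i - M i) + SM = d" by simp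
  qed
  show ?thesis
  proof (cases "SM \<le> d")
    case False
    have "Mu = {}" using szMu False by fastforce
    then have c0: "card Mu = 0" by simp
    show ?thesis using False c0 unfolding Mu_def SM_def by simp
  next
    case True
    define e where "e = d - SM"
    define \<Phi> where "\<Phi> mu = (\<lambda>i. sh mu i - M i)" for mu
    define \<Psi> where "\<Psi> j = tolist (\<lambda>i. j i + M i)" for j
    have gprops: "(\<forall>i. M i \<le> j i + M i \<and> j i + M i \<le> m i) \<and> (\<forall>i. j (Suc i) + M (Suc i) \<le> j i + M i)
        \<and> (\<forall>i\<ge>N. j i + M i = 0) \<and> sz (\<lambda>i. j i + M i) = d" if j: "j \<in> CS r N e" for j
    proof -
      have b: "\<forall>i. M i \<le> j i + M i \<and> j i + M i \<le> m i"
      proof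
        fix i show "M i \<le> j i + M i \<and> j i + M i \<le> m i"
        proof (cases "i < N")
          case True then have "j i \<le> r i" using j by (simp add: CS_def)
          then show ?thesis using cond[rule_format, of i] by (simp add: r_def)
        next
          case False then have "j i = 0" using j by (simp add: CS_def)
          then show ?thesis using cond[rule_format, of i] by simp
        qed
      qed
      moreover have "\<forall>i. j (Suc i) + M (Suc i) \<le> j i + M i"
        using b mM by (meson le_trans)
      moreover have vK: "\<forall>i\<ge>N. j i + M i = 0" using b mK by (metis le_zero_eq)
      moreover have "sz (\<lambda>i. j i + M i) = d"
      proof -
        have "sz (\<lambda>i. j i + M i) = (\<Sum>i<N. j i + M i)" using sz_eq[OF vK] .
        also have "\<dots> = e + SM" using j by (simp add: sum.distrib SM_def CS_def)
        finally show ?thesis using True by (simp add: e_def)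
      qed
      ultimately show ?thesis by blast
    qed
    have bij: "bij_betw \<Phi> Mu (CS r N e)"
    proof (rule bij_betw_byWitness[where f' = \<Psi>])
      show "\<forall>mu\<in>Mu. \<Psi> (\<Phi> mu) = mu"
      proof
        fix mu assume mu: "mu \<in> Mu"
        have b: "\<forall>i. M i \<le> sh mu i" using mu HSiff by (auto simp: Mu_def)
        have "(\<lambda>i. (sh mu i - M i) + M i) = sh mu" using b by auto
        then show "\<Psi> (\<Phi> mu) = mu" using tolist_sh mu by (simp add: \<Psi>_def \<Phi>_def Mu_def partitions_of_def)
      qed
      show "\<forall>j\<in>CS r N e. \<Phi> (\<Psi> j) = j"
      proof
        fix j assume j: "j \<in> CS r N e"
        have dec: "\<forall>i. j (Suc i) + M (Suc i) \<le> j i + M i" and vK: "\<forall>i\<ge>N. j i + M i = 0"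
          using gprops[OF j] by blast+
        have "sh (\<Psi> j) = (\<lambda>i. j i + M i)"
          unfolding \<Psi>_def by (rule tolist_props(1)[OF dec vK])
        then show "\<Phi> (\<Psi> j) = j" by (simp add: \<Phi>_def)
      qed
      show "\<Phi> ` Mu \<subseteq> CS r N e"
      proof
        fix x assume "x \<in> \<Phi> ` Mu"
        then obtain mu where mu: "mu \<in> Mu" "x = \<Phi> mu" by blast
        have b: "\<forall>i. M i \<le> sh mu i \<and> sh mu i \<le> m i" using mu HSiff by (auto simp: Mu_def)
        have "\<forall>i<N. x i \<le> r i" using b mu(2) by (auto simp: \<Phi>_def r_def diff_le_mono)
        moreover have "\<forall>i\<ge>N. x i = 0" using szMu(2)[OF mu(1)] mu(2) by (simp add: \<Phi>_def)
        moreover have "(\<Sum>i<N. x i) = e" using szMu(1)[OF mu(1)] mu(2) by (simp add: \<Phi>_def e_def)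
        ultimately show "x \<in> CS r N e" by (simp add: CS_def)
      qed
      show "\<Psi> ` CS r N e \<subseteq> Mu"
      proof
        fix x assume "x \<in> \<Psi> ` CS r N e"
        then obtain j where j: "j \<in> CS r N e" "x = \<Psi> j" by blast
        note g = gprops[OF j(1)]
        have dec: "\<forall>i. j (Suc i) + M (Suc i) \<le> j i + M i" using g by blast
        have vK: "\<forall>i\<ge>N. j i + M i = 0" using g by blast
        have sh: "sh x = (\<lambda>i. j i + M i)" using tolist_props(1)[OF dec vK] j(2) by (simp add: \<Psi>_def)
        have ip: "is_partition x" using tolist_props(2)[OF dec vK] j(2) by (simp add: \<Psi>_def)
        have "sum_list x = d" using g sh sz_sh[of x] by simp
        moreover have "HS (sh x) (sh l1) \<and> HS (sh x) (sh l2)" using HSiff g sh by simp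
        ultimately show "x \<in> Mu" using ip by (simp add: Mu_def partitions_of_def)
      qed
    qed
    have "card Mu = card (CS r N e)" using bij_betw_same_card[OF bij] .
    then show ?thesis using True unfolding Mu_def SM_def e_def r_def by simp
  qed
qed

theorem mainTheorem2:
  fixes d a b p p' :: nat and lam1 lam2 :: "nat list"
  assumes "lam1 \<in> partitions_of (a + d)" and "lam2 \<in> partitions_of (b + d)"
  shows "schur_coeff2 (F_sum d a b p p') (lam1, lam2) =
    (if part lam1 1 = p \<and> part lam2 1 = p' \<and>
        (\<forall>i\<ge>1. min (part lam1 i) (part lam2 i) \<ge> max (part lam1 (i + 1)) (part lam2 (i + 1)))
     then (let N = length lam1 + length lam2;
               S = (\<Sum>i=1..N. max (part lam1 (i + 1)) (part lam2 (i + 1)));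
               P = (\<Prod>i=1..N. \<Sum>j=0..min (part lam1 i) (part lam2 i)
                                      - max (part lam1 (i + 1)) (part lam2 (i + 1)).
                                  monom (1::int) j)
           in if S \<le> d then coeff P (d - S) else 0)
     else 0)"
proof -
  have s1: "sum_list lam1 = a + d" and s2: "sum_list lam2 = b + d"
    using assms by (auto simp: partitions_of_def)
  have base: "schur_coeff2 (F_sum d a b p p') (lam1, lam2) = int (cntF d a b p p' (lam1, lam2))"
    using F_sum_coeff[OF assms] .
  define Mu where "Mu = {mu \<in> partitions_of d. HS (sh mu) (sh lam1) \<and> HS (sh mu) (sh lam2)}"
  have cnt: "cntF d a b p p' (lam1, lam2) = (if part lam1 1 = p \<and> part lam2 1 = p' then card Mu else 0)"
  proof (cases "part lam1 1 = p \<and> part lam2 1 = p'")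
    case True
    have "{mu \<in> partitions_of d. lam1 \<in> {lam \<in> PL mu a. part lam 1 = p} \<and> lam2 \<in> {lam \<in> PL mu b. part lam 1 = p'}} = Mu"
      unfolding Mu_def using True assms s1 s2
      by (auto simp: PL_def PS_def sz_sh partitions_of_def)
    then show ?thesis using True by (simp add: cntF_def)
  next
    case False
    then have e0: "{mu \<in> partitions_of d. lam1 \<in> {lam \<in> PL mu a. part lam 1 = p} \<and> lam2 \<in> {lam \<in> PL mu b. part lam 1 = p'}} = {}"
      by auto
    have z1: "cntF d a b p p' (lam1, lam2) = 0" unfolding cntF_def fst_conv snd_conv e0 by simp
    have z2: "(if part lam1 1 = p \<and> part lam2 1 = p' then card Mu else 0) = 0" using False by (rule if_not_P)
    show ?thesis by (simp only: z1 z2)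
  qed
  define M where "M = (\<lambda>i. max (sh lam1 (Suc i)) (sh lam2 (Suc i)))"
  define m where "m = (\<lambda>i. min (sh lam1 i) (sh lam2 i))"
  define N where "N = length lam1 + length lam2"
  have cond_iff: "(\<forall>i\<ge>1. min (part lam1 i) (part lam2 i) \<ge> max (part lam1 (i + 1)) (part lam2 (i + 1)))
      \<longleftrightarrow> (\<forall>i. M i \<le> m i)"
  proof
    assume h: "\<forall>i\<ge>1. min (part lam1 i) (part lam2 i) \<ge> max (part lam1 (i + 1)) (part lam2 (i + 1))"
    show "\<forall>i. M i \<le> m i"
    proof
      fix i
      have "min (part lam1 (Suc i)) (part lam2 (Suc i)) \<ge> max (part lam1 (Suc i + 1)) (part lam2 (Suc i + 1))"
        using h by simp
      then show "M i \<le> m i" unfolding M_def m_def by (simp add: part_sh del: max_less_iff_conj)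
    qed
  next
    assume h: "\<forall>i. M i \<le> m i"
    show "\<forall>i\<ge>1. min (part lam1 i) (part lam2 i) \<ge> max (part lam1 (i + 1)) (part lam2 (i + 1))"
    proof (intro allI impI)
      fix i :: nat assume "1 \<le> i"
      then obtain k where k: "i = Suc k" by (cases i) auto
      show "min (part lam1 i) (part lam2 i) \<ge> max (part lam1 (i + 1)) (part lam2 (i + 1))"
        using h[rule_format, of k] unfolding k M_def m_def by (simp add: part_sh del: max_less_iff_conj)
    qed
  qed
  have one: "{1..N} = {Suc 0..N}" by simp
  have S_eq: "(\<Sum>i=1..N. max (part lam1 (i + 1)) (part lam2 (i + 1))) = (\<Sum>i<N. M i)"
    unfolding one sum.atLeast1_atMost_eq by (simp add: M_def part_sh)
  have P_eq: "(\<Prod>i=1..N. \<Sum>j=0..min (part lam1 i) (part lam2 i) - max (part lam1 (i + 1)) (part lam2 (i + 1)).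
                 monom (1::int) j) = (\<Prod>i<N. \<Sum>t=0..m i - M i. monom (1::int) t)"
    unfolding one prod.atLeast1_atMost_eq by (simp add: M_def m_def part_sh)
  show ?thesis
  proof (cases "part lam1 1 = p \<and> part lam2 1 = p'")
    case False
    have z: "cntF d a b p p' (lam1, lam2) = 0" unfolding cnt by (rule if_not_P[OF False])
    have cf: "(part lam1 1 = p \<and> part lam2 1 = p' \<and> X) = False" for X using False by blast
    show ?thesis unfolding base z by (simp only: cf if_False of_nat_0)
  next
    case True
    show ?thesis
    proof (cases "\<forall>i. M i \<le> m i")
      case False
      have "Mu = {}"
      proof (rule ccontr)
        assume "Mu \<noteq> {}"
        then obtain mu where "HS (sh mu) (sh lam1)" "HS (sh mu) (sh lam2)" by (auto simp: Mu_def)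
        then have "\<forall>i. M i \<le> m i" unfolding HS_def M_def m_def by (meson le_trans max.boundedI min.boundedI)
        then show False using False by simp
      qed
      then have l0: "schur_coeff2 (F_sum d a b p p') (lam1, lam2) = 0" using base cnt True by simp
      have nc: "\<not> (\<forall>i\<ge>1. min (part lam1 i) (part lam2 i) \<ge> max (part lam1 (i + 1)) (part lam2 (i + 1)))"
        using cond_iff False by blast
      have cf: "(part lam1 1 = p \<and> part lam2 1 = p' \<and>
          (\<forall>i\<ge>1. min (part lam1 i) (part lam2 i) \<ge> max (part lam1 (i + 1)) (part lam2 (i + 1)))) = False"
        using nc by blast
      show ?thesis by (simp only: l0 cf if_False)
    next
      case c2: True
      have cm: "card Mu = (if (\<Sum>i<N. M i) \<le> d then card (CS (\<lambda>i. m i - M i) N (d - (\<Sum>i<N. M i))) else 0)"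
        unfolding Mu_def M_def m_def N_def by (rule count_mu) (use c2 in \<open>simp add: M_def m_def\<close>)
      have rhs: "(let N = length lam1 + length lam2;
               S = (\<Sum>i=1..N. max (part lam1 (i + 1)) (part lam2 (i + 1)));
               P = (\<Prod>i=1..N. \<Sum>j=0..min (part lam1 i) (part lam2 i)
                                      - max (part lam1 (i + 1)) (part lam2 (i + 1)).
                                  monom (1::int) j)
           in if S \<le> d then coeff P (d - S) else 0)
          = (if (\<Sum>i<N. M i) \<le> d then coeff (\<Prod>i<N. \<Sum>t=0..m i - M i. monom (1::int) t) (d - (\<Sum>i<N. M i)) else 0)"
        unfolding Let_def N_def[symmetric] S_eq P_eq ..
      show ?thesis
        unfolding rhs base cnt using True c2 cond_iff cm coeff_prod_geom by simp
    qed
  qed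
qed


end
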